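(* Let $\lambda$ be a strict partition. Then: (i) the number of standard shifted barely set-valued tableaux of shape $\lambda$ equals $(|\lambda|+1)\,2^{|\lambda|+1}\,g^\lambda\cdot\mathbb{E}(\mathrm{maxchain}_{[\varnothing,\lambda]_{\mathrm{shift}}};\mathrm{ddeg})$; (ii) the number of diagonally unprimed standard shifted barely set-valued tableaux of shape $\lambda$ equals $(|\lambda|+1)\,2^{|\lambda|-\ell(\lambda)}\,g^\lambda\cdot\mathbb{E}\big(\mathrm{maxchain}_{[\varnothing,\lambda]_{\mathrm{shift}}};\,2\cdot\mathrm{ddeg}-\sum_{i=1}^{\ell(\lambda)}\mathcal{T}^-_{[i,i]}\big)$.
   Context: $P^{\mathrm{shift}}_\lambda$ is the set of boxes $[i,j]$ with $1\le i\le\ell(\lambda)$, $i\le j\le i+\lambda_i-1$, ordered by $[i,j]\le[i',j']$ iff $i\le i'$ and $j\le j'$; $[i,i]$ are the main diagonal boxes. $[\varnothing,\lambda]_{\mathrm{shift}}\cong J(P^{\mathrm{shift}}_\lambda)$ is the set of strict partitions contained in $\lambda$ ordered by inclusion; $\mathrm{maxchain}$ gives each element probability proportional to the number of maximal chains through it; $\mathrm{ddeg}$ is the number of covered elements; $\mathcal{T}^-_p(I)=1$ iff $p\in I$ is maximal in $I$, else $0$. Use the alphabet $1<1'<2<2'<\cdots$. A shifted set-valued tableau of shape $\lambda$ assigns to each box $u$ a finite nonempty set $T(u)$ of such letters with: $\max T(u)\le\min T(v)$ whenever $u<v$ in $P^{\mathrm{shift}}_\lambda$; each unprimed letter appears at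 most once in each column; each primed letter at most once in each row. Its monomial is $\mathbf{x}^T=\prod_u\prod_{i\in T(u)}x_i\prod_{i'\in T(u)}x_i$. $T$ is standard if $\mathbf{x}^T=x_1x_2\cdots x_N$ for some $N$; barely set-valued if exactly one box has $\#T(u)=2$ and all others have $\#T(u)=1$; diagonally unprimed if no primed letter occurs in a main diagonal box. $g^\lambda$ is the number of standard shifted tableaux (all $\#T(u)=1$) of shape $\lambda$ with no primed entries (equivalently, linear extensions of $P^{\mathrm{shift}}_\lambda$). *)

theory Defs
  imports Complex_Main "HOL-Library.Multiset" "HOL-Library.Product_Lexorder"
begin

text \<open>A strict partition is a strictly decreasing list of positive integers;
  lambda_i = lam ! (i - 1) (1-indexed rows).\<close>
definition strict_partition :: "nat list \<Rightarrow> bool" where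
  "strict_partition lam \<longleftrightarrow> sorted_wrt (>) lam \<and> (\<forall>x\<in>set lam. 0 < x)"

definition size_part :: "nat list \<Rightarrow> nat" where
  "size_part lam = sum_list lam"

definition shifted_diagram :: "nat list \<Rightarrow> (nat \<times> nat) set" where
  "shifted_diagram lam =
     {(i, j). 1 \<le> i \<and> i \<le> length lam \<and> i \<le> j \<and> j + 1 \<le> i + lam ! (i - 1)}"

definition box_le :: "nat \<times> nat \<Rightarrow> nat \<times> nat \<Rightarrow> bool" where
  "box_le u v \<longleftrightarrow> fst u \<le> fst v \<and> snd u \<le> snd v"

definition box_less :: "nat \<times> nat \<Rightarrow> nat \<times> nat \<Rightarrow> bool" where
  "box_less u v \<longleftrightarrow> box_le u v \<and> u \<noteq> v"

definition order_ideals :: "(nat \<times> nat) set \<Rightarrow> (nat \<times> nat) set set" where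
  "order_ideals P = {I. I \<subseteq> P \<and> (\<forall>u\<in>I. \<forall>v\<in>P. box_le v u \<longrightarrow> v \<in> I)}"

definition max_chains :: "'a set set \<Rightarrow> 'a set set set" where
  "max_chains L = {C. C \<in> chains L \<and> \<not> (\<exists>D\<in>chains L. C \<subset> D)}"

definition nchains_through :: "'a set set \<Rightarrow> 'a set \<Rightarrow> nat" where
  "nchains_through L x = card {C \<in> max_chains L. x \<in> C}"

definition exp_maxchain :: "'a set set \<Rightarrow> ('a set \<Rightarrow> real) \<Rightarrow> real" where
  "exp_maxchain L f =
     (\<Sum>x\<in>L. real (nchains_through L x) * f x) / (\<Sum>x\<in>L. real (nchains_through L x))"

definition covered_by :: "'a set set \<Rightarrow> 'a set \<Rightarrow> 'a set \<Rightarrow> bool" where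
  "covered_by L y x \<longleftrightarrow> y \<in> L \<and> x \<in> L \<and> y \<subset> x \<and> \<not> (\<exists>z\<in>L. y \<subset> z \<and> z \<subset> x)"

definition ddeg :: "'a set set \<Rightarrow> 'a set \<Rightarrow> nat" where
  "ddeg L x = card {y. covered_by L y x}"

definition toggle_minus :: "nat \<times> nat \<Rightarrow> (nat \<times> nat) set \<Rightarrow> nat" where
  "toggle_minus p I = (if p \<in> I \<and> \<not> (\<exists>q\<in>I. box_less p q) then 1 else 0)"

text \<open>Letters: (k, False) is k, (k, True) is k'; k >= 1. The lexicographic
  order on nat \<times> bool gives 1 < 1' < 2 < 2' < ...\<close>
type_synonym letter = "nat \<times> bool"

definition shifted_svt :: "nat list \<Rightarrow> (nat \<times> nat \<Rightarrow> letter set) \<Rightarrow> bool" where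
  "shifted_svt lam T \<longleftrightarrow>
     (\<forall>u. u \<notin> shifted_diagram lam \<longrightarrow> T u = {}) \<and>
     (\<forall>u\<in>shifted_diagram lam. finite (T u) \<and> T u \<noteq> {} \<and> (\<forall>c\<in>T u. 1 \<le> fst c)) \<and>
     (\<forall>u\<in>shifted_diagram lam. \<forall>v\<in>shifted_diagram lam.
        box_less u v \<longrightarrow> Max (T u) \<le> Min (T v)) \<and>
     (\<forall>u\<in>shifted_diagram lam. \<forall>v\<in>shifted_diagram lam. \<forall>k.
        u \<noteq> v \<and> snd u = snd v \<and> (k, False) \<in> T u \<longrightarrow> (k, False) \<notin> T v) \<and>
     (\<forall>u\<in>shifted_diagram lam. \<forall>v\<in>shifted_diagram lam. \<forall>k.
        u \<noteq> v \<and> fst u = fst v \<and> (k, True) \<in> T u \<longrightarrow> (k, True) \<notin> T v)"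

text \<open>The monomial x^T, as a multiset of variable indices.\<close>
definition monomial_svt :: "nat list \<Rightarrow> (nat \<times> nat \<Rightarrow> letter set) \<Rightarrow> nat multiset" where
  "monomial_svt lam T = (\<Sum>u\<in>shifted_diagram lam. \<Sum>c\<in>T u. {# fst c #})"

definition standard_svt :: "nat list \<Rightarrow> (nat \<times> nat \<Rightarrow> letter set) \<Rightarrow> bool" where
  "standard_svt lam T \<longleftrightarrow> (\<exists>N. monomial_svt lam T = mset_set {1..N})"

definition barely_set_valued :: "nat list \<Rightarrow> (nat \<times> nat \<Rightarrow> letter set) \<Rightarrow> bool" where
  "barely_set_valued lam T \<longleftrightarrow>
     (\<exists>!u. u \<in> shifted_diagram lam \<and> card (T u) = 2) \<and>
     (\<forall>u\<in>shifted_diagram lam. card (T u) = 1 \<or> card (T u) = 2)"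

definition diagonally_unprimed :: "nat list \<Rightarrow> (nat \<times> nat \<Rightarrow> letter set) \<Rightarrow> bool" where
  "diagonally_unprimed lam T \<longleftrightarrow>
     (\<forall>i. (i, i) \<in> shifted_diagram lam \<longrightarrow> (\<forall>c\<in>T (i, i). \<not> snd c))"

definition g_shifted :: "nat list \<Rightarrow> nat" where
  "g_shifted lam = card {T. shifted_svt lam T \<and> standard_svt lam T \<and>
      (\<forall>u\<in>shifted_diagram lam. card (T u) = 1) \<and>
      (\<forall>u\<in>shifted_diagram lam. \<forall>c\<in>T u. \<not> snd c)}"

end

theory Submission
  imports Defs "HOL-Library.FuncSet"
begin


lemma box_less_sum: "box_less u v \<Longrightarrow> fst u + snd u < fst v + snd v"
  unfolding box_less_def box_le_def by (cases u; cases v) auto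

lemma box_less_irrefl[simp]: "\<not> box_less u u"
  unfolding box_less_def by simp

lemma box_less_trans: "box_less u v \<Longrightarrow> box_less v w \<Longrightarrow> box_less u w"
  using box_less_sum unfolding box_less_def box_le_def by (meson le_trans less_irrefl order.strict_trans)

lemma box_less_asym: "box_less u v \<Longrightarrow> \<not> box_less v u"
  using box_less_sum[of u v] box_less_sum[of v u] by linarith

lemma box_le_iff: "box_le u v \<longleftrightarrow> u = v \<or> box_less u v"
  unfolding box_less_def box_le_def by auto

lemma ex_minimal:
  assumes "finite S" "S \<noteq> {}"
  shows "\<exists>u\<in>S. \<not> (\<exists>v\<in>S. box_less v u)"
proof -
  obtain u where "u \<in> S" and m: "\<forall>v\<in>S. fst u + snd u \<le> fst v + snd v"
    using ex_min_if_finite[of "(\<lambda>x. fst x + snd x) ` S"] assms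
    by (metis (no_types, lifting) arg_min_if_finite(1) arg_min_if_finite(2) not_le)
  then show ?thesis using box_less_sum by (meson not_le)
qed

lemma ex_maximal:
  assumes "finite S" "S \<noteq> {}"
  shows "\<exists>u\<in>S. \<not> (\<exists>v\<in>S. box_less u v)"
proof -
  have "Max ((\<lambda>x. fst x + snd x) ` S) \<in> (\<lambda>x. fst x + snd x) ` S"
    using assms by (intro Max_in) auto
  then obtain u where "u \<in> S" and "fst u + snd u = Max ((\<lambda>x. fst x + snd x) ` S)" by auto
  moreover have m: "\<forall>v\<in>S. fst v + snd v \<le> fst u + snd u" using assms calculation by auto
  ultimately show ?thesis using box_less_sum by (meson not_le)
qed



definition maxel :: "(nat \<times> nat) set \<Rightarrow> (nat \<times> nat) set" where
  "maxel I = {u\<in>I. \<not> (\<exists>q\<in>I. box_less u q)}"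

lemma ideal_iff: "I \<in> order_ideals P \<longleftrightarrow> I \<subseteq> P \<and> (\<forall>u\<in>I. \<forall>v\<in>P. box_le v u \<longrightarrow> v \<in> I)"
  unfolding order_ideals_def by simp

lemma ideal_sub: "I \<in> order_ideals P \<Longrightarrow> I \<subseteq> P"
  unfolding ideal_iff by blast

lemma ideal_remove:
  assumes "I \<in> order_ideals P" "u \<in> maxel I"
  shows "I - {u} \<in> order_ideals P"
  using assms unfolding ideal_iff maxel_def box_le_iff by blast

lemma covered_iff:
  assumes "finite P" "I \<in> order_ideals P"
  shows "covered_by (order_ideals P) y I \<longleftrightarrow> (\<exists>u\<in>maxel I. y = I - {u})"
proof
  assume c: "covered_by (order_ideals P) y I"
  then have y: "y \<in> order_ideals P" "y \<subset> I" and nz: "\<not> (\<exists>z\<in>order_ideals P. y \<subset> z \<and> z \<subset> I)"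
    unfolding covered_by_def by auto
  have fI: "finite I" using assms finite_subset unfolding ideal_iff by blast
  obtain u where u: "u \<in> I - y" and um: "\<not> (\<exists>v\<in>I - y. box_less u v)"
    using ex_maximal[of "I - y"] fI y by blast
  have uP: "u \<in> P" using u assms unfolding ideal_iff by blast
  have "u \<in> maxel I"
  proof -
    { fix q assume q: "q \<in> I" "box_less u q"
      have "q \<notin> y"
      proof
        assume "q \<in> y"
        then have "u \<in> y" using y(1) uP q(2) unfolding ideal_iff box_less_def by blast
        then show False using u by blast
      qed
      then have False using um q by blast }
    then show ?thesis using u unfolding maxel_def by blast
  qed
  moreover have "y = I - {u}"
  proof (rule ccontr)
    assume "y \<noteq> I - {u}"
    then have "y \<subset> I - {u}" using u y by blast
    moreover have "I - {u} \<subset> I" using u by blast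
    ultimately show False using nz ideal_remove[OF assms(2) \<open>u \<in> maxel I\<close>] by blast
  qed
  ultimately show "\<exists>u\<in>maxel I. y = I - {u}" by blast
next
  assume "\<exists>u\<in>maxel I. y = I - {u}"
  then obtain u where u: "u \<in> maxel I" "y = I - {u}" by blast
  then have uI: "u \<in> I" unfolding maxel_def by blast
  show "covered_by (order_ideals P) y I"
    unfolding covered_by_def using ideal_remove[OF assms(2) u(1)] u uI assms(2) by blast
qed

lemma ddeg_eq:
  assumes "finite P" "I \<in> order_ideals P"
  shows "ddeg (order_ideals P) I = card (maxel I)"
proof -
  have "{y. covered_by (order_ideals P) y I} = (\<lambda>u. I - {u}) ` maxel I"
    using covered_iff[OF assms] by auto
  moreover have "inj_on (\<lambda>u. I - {u}) (maxel I)"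
    unfolding inj_on_def maxel_def by blast
  ultimately show ?thesis unfolding ddeg_def by (simp add: card_image)
qed



definition linext :: "(nat \<times> nat) set \<Rightarrow> (nat \<Rightarrow> nat \<times> nat) set" where
  "linext P = {p \<in> {1..card P} \<rightarrow>\<^sub>E P. bij_betw p {1..card P} P \<and>
      (\<forall>c\<in>{1..card P}. \<forall>d\<in>{1..card P}. box_less (p c) (p d) \<longrightarrow> c < d)}"

definition chain_of :: "(nat \<Rightarrow> nat \<times> nat) \<Rightarrow> nat \<Rightarrow> (nat \<times> nat) set set" where
  "chain_of p n = (\<lambda>k. p ` {1..k}) ` {0..n}"

lemma linextD:
  assumes "p \<in> linext P"
  shows "p \<in> {1..card P} \<rightarrow>\<^sub>E P" "bij_betw p {1..card P} P"
    "\<And>c d. c \<in> {1..card P} \<Longrightarrow> d \<in> {1..card P} \<Longrightarrow> box_less (p c) (p d) \<Longrightarrow> c < d"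
  using assms unfolding linext_def by auto

lemma linext_ideal:
  assumes "p \<in> linext P" "k \<le> card P"
  shows "p ` {1..k} \<in> order_ideals P"
proof -
  note D = linextD[OF assms(1)]
  have sub: "p ` {1..k} \<subseteq> P" using D(2) assms(2) unfolding bij_betw_def by auto
  { fix c v assume c: "c \<in> {1..k}" and v: "v \<in> P" "box_le v (p c)"
    have "v \<in> p ` {1..card P}" using D(2) v(1) unfolding bij_betw_def by simp
    then obtain d where d: "d \<in> {1..card P}" "v = p d" by blast
    have "v \<in> p ` {1..k}"
    proof (cases "v = p c")
      case True then show ?thesis using c by (intro rev_image_eqI[of c]) auto
    next
      case False
      then have "box_less (p d) (p c)" using v d unfolding box_le_iff by auto
      then have "d < c" using D(3)[of d c] d c assms(2) by auto
      then show ?thesis using d c by (intro rev_image_eqI[of d]) auto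
    qed }
  then show ?thesis unfolding ideal_iff using sub by blast
qed

lemma linext_card_img:
  assumes "p \<in> linext P" "k \<le> card P"
  shows "card (p ` {1..k}) = k"
proof -
  have "{1..k} \<subseteq> {1..card P}" using assms(2) by auto
  then have "inj_on p {1..k}" using linextD(2)[OF assms(1)]
    unfolding bij_betw_def by (meson inj_on_subset)
  then show ?thesis by (simp add: card_image)
qed

lemma linext_img_Suc:
  "p ` {1..Suc k} = insert (p (Suc k)) (p ` {1..k})"
  by (simp add: atLeastAtMostSuc_conv)

lemma linext_img_mono: "(i::nat) \<le> j \<Longrightarrow> p ` {1..i} \<subseteq> p ` {1..j}"
  by (rule image_mono) auto

lemma linext_img_comp: "p ` {1..i::nat} \<subseteq> p ` {1..j} \<or> p ` {1..j} \<subseteq> p ` {1..i}"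
proof (cases "i \<le> j")
  case True then show ?thesis using linext_img_mono[of i j p] by simp
next
  case False then show ?thesis using linext_img_mono[of j i p] by simp
qed

lemma chain_of_inj:
  assumes "p \<in> linext P"
  shows "inj_on (\<lambda>k. p ` {1..k}) {0..card P}"
  unfolding inj_on_def using linext_card_img[OF assms] by (metis atLeastAtMost_iff)

lemma chain_of_max:
  assumes fin: "finite P" and p: "p \<in> linext P"
  shows "chain_of p (card P) \<in> max_chains (order_ideals P)"
proof -
  let ?n = "card P"
  let ?L = "order_ideals P"
  have ch: "chain_of p ?n \<in> chains ?L"
  proof -
    have "(\<lambda>k. p ` {1..k}) ` {0..?n} \<subseteq> ?L" using linext_ideal[OF p] by auto
    moreover have "\<forall>A\<in>(\<lambda>k. p ` {1..k}) ` {0..?n}. \<forall>B\<in>(\<lambda>k. p ` {1..k}) ` {0..?n}. A \<subseteq> B \<or> B \<subseteq> A"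
      using linext_img_comp[of p] by blast
    ultimately show ?thesis unfolding chains_def chain_subset_def chain_of_def by blast
  qed
  moreover have "\<not> (\<exists>D\<in>chains ?L. chain_of p ?n \<subset> D)"
  proof
    assume "\<exists>D\<in>chains ?L. chain_of p ?n \<subset> D"
    then obtain D X where D: "D \<in> chains ?L" "chain_of p ?n \<subseteq> D" and X: "X \<in> D" "X \<notin> chain_of p ?n"
      by blast
    have XL: "X \<in> ?L" using D X unfolding chains_def by blast
    have comp: "p ` {1..k} \<subseteq> X \<or> X \<subseteq> p ` {1..k}" if "k \<le> ?n" for k
    proof -
      have "p ` {1..k} \<in> D" using D(2) that unfolding chain_of_def by auto
      then show ?thesis using D(1) X unfolding chains_def chain_subset_def by blast
    qed
    define K where "K = {k\<in>{0..?n}. p ` {1..k} \<subseteq> X}"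
    have "0 \<in> K" unfolding K_def by auto
    have fK: "finite K" unfolding K_def by auto
    have kK: "Max K \<in> K" using Max_in[OF fK] \<open>0 \<in> K\<close> by blast
    have kmax: "\<And>j. j \<in> K \<Longrightarrow> j \<le> Max K" using Max_ge[OF fK] by blast
    define k where "k = Max K"
    have k: "k \<le> ?n" "p ` {1..k} \<subseteq> X" using kK unfolding K_def k_def by auto
    show False
    proof (cases "k = ?n")
      case True
      have "p ` {1..?n} = P" using linextD(2)[OF p] unfolding bij_betw_def by auto
      then have "X = p ` {1..?n}" using XL k True unfolding ideal_iff by auto
      moreover have "p ` {1..?n} \<in> chain_of p ?n" unfolding chain_of_def by (intro imageI) simp
      ultimately show False using X(2) by simp
    next
      case False
      then have "Suc k \<le> ?n" using k by auto
      have "\<not> p ` {1..Suc k} \<subseteq> X"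
      proof
        assume "p ` {1..Suc k} \<subseteq> X"
        then have "Suc k \<in> K" unfolding K_def using \<open>Suc k \<le> ?n\<close> by auto
        then have "Suc k \<le> Max K" using kmax by blast
        then show False using k_def by simp
      qed
      then have "X \<subseteq> p ` {1..Suc k}" using comp[OF \<open>Suc k \<le> ?n\<close>] by blast
      then have "X = p ` {1..k} \<or> X = p ` {1..Suc k}"
        using k(2) unfolding linext_img_Suc by blast
      moreover have "p ` {1..k} \<in> chain_of p ?n" unfolding chain_of_def using k(1) by (intro imageI) simp
      moreover have "p ` {1..Suc k} \<in> chain_of p ?n" unfolding chain_of_def using \<open>Suc k \<le> ?n\<close> by (intro imageI) simp
      ultimately show False using X(2) by metis
    qed
  qed
  ultimately show ?thesis unfolding max_chains_def by blast
qed



lemma ex_max_f: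
  fixes f :: "'a \<Rightarrow> nat"
  assumes "finite S" "S \<noteq> {}"
  shows "\<exists>A\<in>S. \<forall>Y\<in>S. f Y \<le> f A"
proof -
  have "Max (f ` S) \<in> f ` S" using assms by (intro Max_in) auto
  then obtain A where "A \<in> S" "f A = Max (f ` S)" by auto
  then show ?thesis using assms by (metis Max_ge finite_imageI imageI)
qed

lemma ex_min_f:
  fixes f :: "'a \<Rightarrow> nat"
  assumes "finite S" "S \<noteq> {}"
  shows "\<exists>A\<in>S. \<forall>Y\<in>S. f A \<le> f Y"
proof -
  have "Min (f ` S) \<in> f ` S" using assms by (intro Min_in) auto
  then obtain A where "A \<in> S" "f A = Min (f ` S)" by auto
  then show ?thesis using assms by (metis Min_le finite_imageI imageI)
qed

lemma insert_minus_self: "x \<notin> A \<Longrightarrow> insert x A - A = {x}"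
  by blast

lemma linext_diff:
  assumes "p \<in> linext P" "Suc j \<le> card P"
  shows "p ` {1..Suc j} - p ` {1..j} = {p (Suc j)}"
proof -
  have "inj_on p {1..card P}" using linextD(2)[OF assms(1)] unfolding bij_betw_def by blast
  have "p (Suc j) \<notin> p ` {1..j}"
  proof
    assume "p (Suc j) \<in> p ` {1..j}"
    then obtain i where i: "i \<in> {1..j}" "p i = p (Suc j)" by auto
    then have "i = Suc j" using inj_onD[OF \<open>inj_on p {1..card P}\<close> i(2)] assms(2) by auto
    then show False using i by simp
  qed
  then show ?thesis unfolding linext_img_Suc by (rule insert_minus_self)
qed

lemma chain_of_inj_p:
  assumes "finite P"
  shows "inj_on (\<lambda>p. chain_of p (card P)) (linext P)"
proof (rule inj_onI)
  fix p q assume p: "p \<in> linext P" and q: "q \<in> linext P" and eq: "chain_of p (card P) = chain_of q (card P)"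
  have same: "p ` {1..k} = q ` {1..k}" if k: "k \<le> card P" for k
  proof -
    have "p ` {1..k} \<in> chain_of p (card P)" using k unfolding chain_of_def by auto
    then have "p ` {1..k} \<in> chain_of q (card P)" using eq by simp
    then obtain j where j: "j \<le> card P" "p ` {1..k} = q ` {1..j}" unfolding chain_of_def by auto
    have "j = k" using linext_card_img[OF p k] linext_card_img[OF q j(1)] j(2) by simp
    then show ?thesis using j by simp
  qed
  show "p = q"
  proof (rule extensionalityI[of _ "{1..card P}"])
    show "p \<in> extensional {1..card P}" "q \<in> extensional {1..card P}"
      using linextD(1)[OF p] linextD(1)[OF q] by (auto simp: PiE_def)
  next
    fix c assume c: "c \<in> {1..card P}"
    then obtain j where j: "c = Suc j" by (cases c) auto
    have "{p c} = {q c}"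
      using linext_diff[OF p, of j] linext_diff[OF q, of j] same[of j] same[of c] c j by auto
    then show "p c = q c" by simp
  qed
qed



lemma mc_basic:
  assumes fin: "finite P" and C: "C \<in> max_chains (order_ideals P)"
  shows "C \<subseteq> order_ideals P" "\<And>A B. A \<in> C \<Longrightarrow> B \<in> C \<Longrightarrow> A \<subseteq> B \<or> B \<subseteq> A"
    "\<And>Z. Z \<in> order_ideals P \<Longrightarrow> (\<forall>Y\<in>C. Y \<subseteq> Z \<or> Z \<subseteq> Y) \<Longrightarrow> Z \<in> C"
proof -
  show sub: "C \<subseteq> order_ideals P" using C unfolding max_chains_def chains_def by blast
  show comp: "\<And>A B. A \<in> C \<Longrightarrow> B \<in> C \<Longrightarrow> A \<subseteq> B \<or> B \<subseteq> A"
    using C unfolding max_chains_def chains_def chain_subset_def by blast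
  fix Z assume Z: "Z \<in> order_ideals P" "\<forall>Y\<in>C. Y \<subseteq> Z \<or> Z \<subseteq> Y"
  show "Z \<in> C"
  proof (rule ccontr)
    assume "Z \<notin> C"
    have "insert Z C \<in> chains (order_ideals P)"
      using sub comp Z unfolding chains_def chain_subset_def by blast
    moreover have "C \<subset> insert Z C" using \<open>Z \<notin> C\<close> by blast
    ultimately show False using C unfolding max_chains_def by blast
  qed
qed

lemma ideals_finite: "finite P \<Longrightarrow> finite (order_ideals P)"
  unfolding order_ideals_def by (rule finite_subset[of _ "Pow P"]) auto

lemma ideal_finite: "finite P \<Longrightarrow> I \<in> order_ideals P \<Longrightarrow> finite I"
  unfolding ideal_iff using finite_subset by blast

lemma mc_card:
  assumes fin: "finite P" and C: "C \<in> max_chains (order_ideals P)" and k: "k \<le> card P"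
  shows "\<exists>X\<in>C. card X = k"
proof (rule ccontr)
  assume nok: "\<not> (\<exists>X\<in>C. card X = k)"
  note mb = mc_basic[OF fin C]
  have finC: "finite C" using mb(1) ideals_finite[OF fin] finite_subset by blast
  have cardle: "card Y \<le> card P" if "Y \<in> C" for Y
  proof -
    have "Y \<subseteq> P" using that mb(1) ideal_sub by blast
    then show ?thesis using fin card_mono by blast
  qed
  have e: "{} \<in> C" by (rule mb(3)) (auto simp: ideal_iff)
  have PC: "P \<in> C"
  proof (rule mb(3))
    show "P \<in> order_ideals P" by (auto simp: ideal_iff)
    show "\<forall>Y\<in>C. Y \<subseteq> P \<or> P \<subseteq> Y" using mb(1) ideal_sub by blast
  qed
  define Sa where "Sa = {X\<in>C. card X < k}"
  define Sb where "Sb = {X\<in>C. k < card X}"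
  have "k \<noteq> 0" using nok e by force
  then have "{} \<in> Sa" unfolding Sa_def using e by auto
  have "P \<in> Sb" unfolding Sb_def using PC nok k by force
  have fSa: "finite Sa" "finite Sb" using finC unfolding Sa_def Sb_def by auto
  obtain A where A: "A \<in> Sa" "\<forall>Y\<in>Sa. card Y \<le> card A"
    using ex_max_f[OF fSa(1), of card] \<open>{} \<in> Sa\<close> by blast
  obtain B where B: "B \<in> Sb" "\<forall>Y\<in>Sb. card B \<le> card Y"
    using ex_min_f[OF fSa(2), of card] \<open>P \<in> Sb\<close> by blast
  have AC: "A \<in> C" "card A < k" and BC: "B \<in> C" "k < card B" using A B unfolding Sa_def Sb_def by auto
  have finB: "finite B" using BC mb(1) ideal_finite[OF fin] by blast
  have AB: "A \<subseteq> B"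
  proof -
    have finA: "finite A" using AC mb(1) ideal_finite[OF fin] by blast
    have "\<not> B \<subseteq> A"
    proof
      assume "B \<subseteq> A"
      then have "card B \<le> card A" using finA card_mono by blast
      then show False using AC BC by linarith
    qed
    then show ?thesis using mb(2)[OF AC(1) BC(1)] by blast
  qed
  have lowY: "Y \<subseteq> A" if "Y \<in> C" "card Y < k" for Y
  proof -
    have "card Y \<le> card A" using A that unfolding Sa_def by auto
    moreover have finY: "finite Y" using that mb(1) ideal_finite[OF fin] by blast
    ultimately show ?thesis using mb(2)[OF that(1) AC(1)] psubset_card_mono[OF finY, of A]
      by (cases "A = Y") auto
  qed
  have highY: "B \<subseteq> Y" if "Y \<in> C" "k < card Y" for Y
  proof -
    have "card B \<le> card Y" using B that unfolding Sb_def by auto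
    then show ?thesis using mb(2)[OF that(1) BC(1)] psubset_card_mono[OF finB, of Y]
      by (cases "B = Y") auto
  qed
  have "B - A \<noteq> {}" using AB AC BC by auto
  then obtain u where u: "u \<in> B - A" and um: "\<not> (\<exists>v\<in>B - A. box_less v u)"
    using ex_minimal[of "B - A"] finB by blast
  define Z where "Z = insert u A"
  have BL: "B \<in> order_ideals P" "A \<in> order_ideals P" using AC BC mb(1) by auto
  have ZL: "Z \<in> order_ideals P"
    unfolding Z_def ideal_iff
  proof (intro conjI ballI impI)
    show "insert u A \<subseteq> P" using BL u unfolding ideal_iff by blast
  next
    fix w v assume w: "w \<in> insert u A" and v: "v \<in> P" "box_le v w"
    show "v \<in> insert u A"
    proof (cases "w = u")
      case False then show ?thesis using w v BL(2) unfolding ideal_iff by blast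
    next
      case True
      have "v \<in> B" using v BL(1) u True unfolding ideal_iff by blast
      then show ?thesis using um v True unfolding box_le_iff by blast
    qed
  qed
  have finA: "finite A" using finB AB finite_subset by blast
  have cZ: "card Z = Suc (card A)" unfolding Z_def using u finA by auto
  have "Z \<in> C"
  proof (rule mb(3)[OF ZL], intro ballI)
    fix Y assume Y: "Y \<in> C"
    have "card Y \<noteq> k" using nok Y by blast
    then show "Y \<subseteq> Z \<or> Z \<subseteq> Y"
    proof (cases "card Y < k")
      case True then show ?thesis using lowY[OF Y] unfolding Z_def by blast
    next
      case False
      then have "B \<subseteq> Y" using highY[OF Y] \<open>card Y \<noteq> k\<close> by auto
      then show ?thesis using u AB unfolding Z_def by blast
    qed
  qed
  moreover have "card Z \<le> k" using cZ AC by simp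
  ultimately have "card Z < k" using nok by force
  then have "card Z \<le> card A" using A \<open>Z \<in> C\<close> unfolding Sa_def by auto
  then show False using cZ by simp
qed



lemma mc_surj:
  assumes fin: "finite P" and C: "C \<in> max_chains (order_ideals P)"
  shows "\<exists>p\<in>linext P. C = chain_of p (card P)"
proof -
  let ?n = "card P"
  note mb = mc_basic[OF fin C]
  have finY: "finite Y" if "Y \<in> C" for Y using that mb(1) ideal_finite[OF fin] by blast
  have uniq: "X = Y" if "X \<in> C" "Y \<in> C" "card X = card Y" for X Y
    using mb(2)[OF that(1,2)] finY that by (metis card_subset_eq)
  define X where "X k = (THE X. X \<in> C \<and> card X = k)" for k
  have X: "X k \<in> C" "card (X k) = k" if k: "k \<le> ?n" for k
  proof -
    obtain Y where "Y \<in> C" "card Y = k" using mc_card[OF fin C k] by blast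
    then have "X k = Y" unfolding X_def using uniq by (intro the_equality) auto
    then show "X k \<in> C" "card (X k) = k" using \<open>Y \<in> C\<close> \<open>card Y = k\<close> by auto
  qed
  have XP: "X k \<subseteq> P" if "k \<le> ?n" for k using X(1)[OF that] mb(1) ideal_sub by blast
  have Xsub: "X k \<subseteq> X (Suc k)" if "Suc k \<le> ?n" for k
  proof -
    have fk: "finite (X k)" using finY X(1) that by simp
    have "\<not> X (Suc k) \<subseteq> X k"
    proof
      assume "X (Suc k) \<subseteq> X k"
      then have "card (X (Suc k)) \<le> card (X k)" using fk card_mono by blast
      then show False using X(2)[of k] X(2)[OF that] that by simp
    qed
    then show ?thesis using mb(2)[OF X(1) X(1), of k "Suc k"] that by auto
  qed
  define p where "p c = (if c \<in> {1..?n} then the_elem (X c - X (c - 1)) else undefined)" for c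
  have step: "X (Suc j) = insert (p (Suc j)) (X j) \<and> p (Suc j) \<notin> X j" if "Suc j \<le> ?n" for j
  proof -
    have fj: "finite (X j)" using finY X(1) that by simp
    have "card (X (Suc j) - X j) = 1"
      using card_Diff_subset[OF fj Xsub[OF that]] X[of j] X[OF that] that by simp
    then obtain x where x: "X (Suc j) - X j = {x}" by (meson card_1_singletonE)
    then have "p (Suc j) = x" unfolding p_def using that by auto
    then show ?thesis using x Xsub[OF that] by blast
  qed
  have Xp: "X k = p ` {1..k}" if "k \<le> ?n" for k
    using that
  proof (induction k)
    case 0
    then show ?case using X[of 0] finY[OF X(1)[of 0]] by auto
  next
    case (Suc k)
    then show ?case using step[OF Suc.prems] linext_img_Suc[of p k] by simp
  qed
  have Xn: "X ?n = P" using XP[of ?n] X[of ?n] fin by (simp add: card_subset_eq)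
  have pin: "p \<in> {1..?n} \<rightarrow>\<^sub>E P"
  proof
    fix c assume c: "c \<in> {1..?n}"
    then have "p c \<in> X c" using Xp[of c] by auto
    then show "p c \<in> P" using XP[of c] c by auto
  next
    fix c assume "c \<notin> {1..?n}" then show "p c = undefined" unfolding p_def by auto
  qed
  have img: "p ` {1..?n} = P" using Xp[of ?n] Xn by simp
  have bij: "bij_betw p {1..?n} P"
    unfolding bij_betw_def using img by (simp add: eq_card_imp_inj_on)
  have mono: "c < d" if cd: "c \<in> {1..?n}" "d \<in> {1..?n}" "box_less (p c) (p d)" for c d
  proof (rule ccontr)
    assume "\<not> c < d"
    moreover have "c \<noteq> d" using cd(3) by auto
    ultimately have "d < c" by simp
    then obtain j where j: "c = Suc j" "d \<le> j" by (cases c) auto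
    have "p d \<in> X j" using Xp[of j] j cd by auto
    moreover have "X j \<in> order_ideals P" using X(1)[of j] mb(1) j cd by auto
    moreover have "p c \<in> P" using pin cd by auto
    ultimately have "p c \<in> X j" using cd(3) unfolding ideal_iff box_less_def by blast
    then show False using step[of j] j cd by auto
  qed
  have pl: "p \<in> linext P" unfolding linext_def using pin bij mono by blast
  have "C = chain_of p ?n"
  proof
    show "chain_of p ?n \<subseteq> C" unfolding chain_of_def using X Xp by auto
  next
    show "C \<subseteq> chain_of p ?n"
    proof
      fix Y assume Y: "Y \<in> C"
      have cY: "card Y \<le> ?n" using Y mb(1) fin ideal_sub by (meson card_mono subsetD)
      have "Y = X (card Y)" using uniq[OF Y X(1)[OF cY]] X(2)[OF cY] by simp
      then show "Y \<in> chain_of p ?n" using Xp[OF cY] cY unfolding chain_of_def by auto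
    qed
  qed
  then show ?thesis using pl by blast
qed

lemma chain_bij:
  assumes "finite P"
  shows "bij_betw (\<lambda>p. chain_of p (card P)) (linext P) (max_chains (order_ideals P))"
  unfolding bij_betw_def using chain_of_inj_p[OF assms] chain_of_max[OF assms] mc_surj[OF assms]
  by blast



lemma max_chains_finite:
  assumes "finite P"
  shows "finite (max_chains (order_ideals P))"
proof -
  have "max_chains (order_ideals P) \<subseteq> Pow (order_ideals P)"
    unfolding max_chains_def chains_def by auto
  then show ?thesis using ideals_finite[OF assms] finite_subset by blast
qed

lemma sum_nchains:
  fixes h :: "(nat \<times> nat) set \<Rightarrow> real"
  assumes fin: "finite P"
  shows "(\<Sum>I\<in>order_ideals P. real (nchains_through (order_ideals P) I) * h I)
       = (\<Sum>p\<in>linext P. \<Sum>k=0..card P. h (p ` {1..k}))"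
proof -
  let ?L = "order_ideals P"
  let ?M = "max_chains ?L"
  have fL: "finite ?L" using ideals_finite[OF fin] .
  have fM: "finite ?M" using max_chains_finite[OF fin] .
  have CL: "C \<subseteq> ?L" if "C \<in> ?M" for C using that unfolding max_chains_def chains_def by blast
  have "(\<Sum>I\<in>?L. real (nchains_through ?L I) * h I) = (\<Sum>I\<in>?L. \<Sum>C\<in>?M. if I \<in> C then h I else 0)"
  proof (rule sum.cong[OF refl])
    fix I assume "I \<in> ?L"
    have "real (nchains_through ?L I) = (\<Sum>C\<in>?M. if I \<in> C then 1 else 0)"
      unfolding nchains_through_def using sum.inter_filter[OF fM, of "\<lambda>_. 1::real" "\<lambda>C. I \<in> C"] by simp
    then show "real (nchains_through ?L I) * h I = (\<Sum>C\<in>?M. if I \<in> C then h I else 0)"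
      by (auto simp add: sum_distrib_right intro!: sum.cong)
  qed
  also have "\<dots> = (\<Sum>C\<in>?M. \<Sum>I\<in>?L. if I \<in> C then h I else 0)" by (rule sum.swap)
  also have "\<dots> = (\<Sum>C\<in>?M. \<Sum>I\<in>C. h I)"
  proof (rule sum.cong[OF refl])
    fix C assume "C \<in> ?M"
    then have "C \<subseteq> ?L" by (rule CL)
    then have "{I \<in> ?L. I \<in> C} = C" by blast
    then show "(\<Sum>I\<in>?L. if I \<in> C then h I else 0) = (\<Sum>I\<in>C. h I)"
      using sum.inter_filter[OF fL, of h "\<lambda>I. I \<in> C"] by simp
  qed
  also have "\<dots> = (\<Sum>p\<in>linext P. \<Sum>I\<in>chain_of p (card P). h I)"
    using sum.reindex_bij_betw[OF chain_bij[OF fin], of "\<lambda>C. \<Sum>I\<in>C. h I"] by simp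
  also have "\<dots> = (\<Sum>p\<in>linext P. \<Sum>k=0..card P. h (p ` {1..k}))"
  proof (rule sum.cong[OF refl])
    fix p assume "p \<in> linext P"
    then show "(\<Sum>I\<in>chain_of p (card P). h I) = (\<Sum>k=0..card P. h (p ` {1..k}))"
      unfolding chain_of_def using sum.reindex[OF chain_of_inj, of p P h] by simp
  qed
  finally show ?thesis .
qed

lemma sum_nchains_one:
  assumes fin: "finite P"
  shows "(\<Sum>I\<in>order_ideals P. real (nchains_through (order_ideals P) I))
       = real (card (linext P)) * real (card P + 1)"
  using sum_nchains[OF fin, of "\<lambda>_. 1"] by simp



lemma sum_single_mset: "finite X \<Longrightarrow> (\<Sum>x\<in>X. {#g x#}) = image_mset g (mset_set X)"
  by (induction X rule: finite_induct) auto

lemma image_mset_eq_mset_set: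
  assumes "finite X" "finite Y"
  shows "image_mset g (mset_set X) = mset_set Y \<longleftrightarrow> inj_on g X \<and> g ` X = Y"
proof
  assume "inj_on g X \<and> g ` X = Y"
  then show "image_mset g (mset_set X) = mset_set Y" by (simp add: image_mset_mset_set)
next
  assume eq: "image_mset g (mset_set X) = mset_set Y"
  have "set_mset (image_mset g (mset_set X)) = set_mset (mset_set Y)" using eq by simp
  then have img: "g ` X = Y" using assms by simp
  have "size (image_mset g (mset_set X)) = size (mset_set Y)" using eq by simp
  then have "card X = card Y" by simp
  then have "card (g ` X) = card X" using img by simp
  then have "inj_on g X" using assms(1) by (simp add: inj_on_iff_eq_card)
  then show "inj_on g X \<and> g ` X = Y" using img by simp
qed

lemma svt_finite_boxes: "shifted_svt lam T \<Longrightarrow> u \<in> shifted_diagram lam \<Longrightarrow> finite (T u)"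
  unfolding shifted_svt_def by blast

lemma finite_diagram: "finite (shifted_diagram lam)"
proof -
  have "shifted_diagram lam \<subseteq> {0..length lam} \<times> {0..length lam + Max (insert 0 (set lam))}"
  proof
    fix x assume x: "x \<in> shifted_diagram lam"
    then obtain i j where ij: "x = (i, j)" "1 \<le> i" "i \<le> length lam" "i \<le> j" "j + 1 \<le> i + lam ! (i - 1)"
      unfolding shifted_diagram_def by auto
    have "lam ! (i - 1) \<in> set lam" using ij by auto
    then have m: "lam ! (i - 1) \<le> Max (insert 0 (set lam))" by simp
    have "j \<le> length lam + Max (insert 0 (set lam))" using ij(3,5) m by linarith
    then show "x \<in> {0..length lam} \<times> {0..length lam + Max (insert 0 (set lam))}" using ij by auto
  qed
  then show ?thesis by (rule finite_subset) auto
qed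

lemma monomial_char:
  assumes "shifted_svt lam T"
  shows "monomial_svt lam T = image_mset (\<lambda>x. fst (snd x)) (mset_set (Sigma (shifted_diagram lam) T))"
proof -
  have "monomial_svt lam T = (\<Sum>x\<in>Sigma (shifted_diagram lam) T. {# fst (snd x) #})"
    unfolding monomial_svt_def
    using sum.Sigma[of "shifted_diagram lam" T "\<lambda>u c. {# fst c #}"] finite_diagram[of lam] svt_finite_boxes[OF assms]
    by (simp add: case_prod_unfold)
  also have "\<dots> = image_mset (\<lambda>x. fst (snd x)) (mset_set (Sigma (shifted_diagram lam) T))"
    by (rule sum_single_mset) (use finite_diagram svt_finite_boxes[OF assms] in auto)
  finally show ?thesis .
qed

lemma standard_N_char:
  assumes "shifted_svt lam T"
  shows "monomial_svt lam T = mset_set {1..N} \<longleftrightarrow>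
     inj_on (\<lambda>x. fst (snd x)) (Sigma (shifted_diagram lam) T) \<and>
     (\<lambda>x. fst (snd x)) ` Sigma (shifted_diagram lam) T = {1..N}"
  unfolding monomial_char[OF assms]
  by (rule image_mset_eq_mset_set) (use finite_diagram svt_finite_boxes[OF assms] in auto)



definition Phi :: "nat \<Rightarrow> (nat \<Rightarrow> nat \<times> nat) \<Rightarrow> (nat \<Rightarrow> bool) \<Rightarrow> (nat \<times> nat \<Rightarrow> letter set)" where
  "Phi N pos s = (\<lambda>v. (\<lambda>c. (c, s c)) ` {c\<in>{1..N}. pos c = v})"

definition mono_pos :: "nat \<Rightarrow> (nat \<Rightarrow> nat \<times> nat) \<Rightarrow> bool" where
  "mono_pos N pos \<longleftrightarrow> (\<forall>c\<in>{1..N}. \<forall>d\<in>{1..N}. box_less (pos c) (pos d) \<longrightarrow> c < d)"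

definition Dom :: "(nat \<times> nat) set \<Rightarrow> nat \<Rightarrow> ((nat \<Rightarrow> nat \<times> nat) \<times> (nat \<Rightarrow> bool)) set" where
  "Dom P N = {(pos, s). pos \<in> {1..N} \<rightarrow>\<^sub>E P \<and> pos ` {1..N} = P \<and> mono_pos N pos \<and> s \<in> {1..N} \<rightarrow>\<^sub>E UNIV}"

definition Tab :: "nat list \<Rightarrow> nat \<Rightarrow> (nat \<times> nat \<Rightarrow> letter set) set" where
  "Tab lam N = {T. shifted_svt lam T \<and> monomial_svt lam T = mset_set {1..N}}"

lemma Phi_mem: "(x, b) \<in> Phi N pos s v \<longleftrightarrow> x \<in> {1..N} \<and> pos x = v \<and> b = s x"
  unfolding Phi_def by auto

lemma Phi_in_Tab:
  assumes "(pos, s) \<in> Dom (shifted_diagram lam) N"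
  shows "Phi N pos s \<in> Tab lam N"
proof -
  let ?P = "shifted_diagram lam"
  let ?T = "Phi N pos s"
  have pos: "pos \<in> {1..N} \<rightarrow>\<^sub>E ?P" "pos ` {1..N} = ?P" "mono_pos N pos"
    using assms unfolding Dom_def by auto
  have fin: "finite (?T u)" for u unfolding Phi_def by auto
  have ne: "?T u \<noteq> {}" if u: "u \<in> ?P" for u
  proof -
    have "u \<in> pos ` {1..N}" using pos(2) u by simp
    then obtain c where "c \<in> {1..N}" "pos c = u" by blast
    then have "(c, s c) \<in> ?T u" by (simp add: Phi_mem)
    then show ?thesis by blast
  qed
  have lt: "fst a < fst b" if "a \<in> ?T u" "b \<in> ?T v" "box_less u v" for a b u v
  proof -
    obtain c x d y where "a = (c, x)" "b = (d, y)" by (cases a, cases b) auto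
    then show ?thesis using that pos(3) unfolding mono_pos_def by (auto simp: Phi_mem)
  qed
  have s1: "\<forall>u. u \<notin> ?P \<longrightarrow> ?T u = {}"
  proof (intro allI impI)
    fix u assume "u \<notin> ?P"
    then have "\<forall>c\<in>{1..N}. pos c \<noteq> u" using pos(1) by (auto simp: PiE_def Pi_def)
    then show "?T u = {}" unfolding Phi_def by auto
  qed
  have s2: "\<forall>u\<in>?P. finite (?T u) \<and> ?T u \<noteq> {} \<and> (\<forall>c\<in>?T u. 1 \<le> fst c)"
    using fin ne unfolding Phi_def by auto
  have s3: "\<forall>u\<in>?P. \<forall>v\<in>?P. box_less u v \<longrightarrow> Max (?T u) \<le> Min (?T v)"
  proof (intro ballI impI)
    fix u v assume uv: "u \<in> ?P" "v \<in> ?P" "box_less u v"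
    have "Max (?T u) \<in> ?T u" "Min (?T v) \<in> ?T v" using fin ne uv by auto
    then have "fst (Max (?T u)) < fst (Min (?T v))" using lt uv by blast
    then show "Max (?T u) \<le> Min (?T v)" by (simp add: less_eq_prod_def)
  qed
  have s4: "\<forall>u\<in>?P. \<forall>v\<in>?P. \<forall>k. u \<noteq> v \<and> snd u = snd v \<and> (k, False) \<in> ?T u \<longrightarrow> (k, False) \<notin> ?T v"
    by (auto simp: Phi_mem)
  have s5: "\<forall>u\<in>?P. \<forall>v\<in>?P. \<forall>k. u \<noteq> v \<and> fst u = fst v \<and> (k, True) \<in> ?T u \<longrightarrow> (k, True) \<notin> ?T v"
    by (auto simp: Phi_mem)
  have svt: "shifted_svt lam ?T" unfolding shifted_svt_def using s1 s2 s3 s4 s5 by blast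
  have inj: "inj_on (\<lambda>x. fst (snd x)) (Sigma ?P ?T)"
  proof (rule inj_onI)
    fix x y assume x: "x \<in> Sigma ?P ?T" and y: "y \<in> Sigma ?P ?T" and eq: "fst (snd x) = fst (snd y)"
    obtain u a b where xx: "x = (u, (a, b))" by (cases x) auto
    obtain v c d where yy: "y = (v, (c, d))" by (cases y) auto
    show "x = y" using x y eq unfolding xx yy by (auto simp: Phi_mem)
  qed
  have img: "(\<lambda>x. fst (snd x)) ` Sigma ?P ?T = {1..N}"
  proof
    show "(\<lambda>x. fst (snd x)) ` Sigma ?P ?T \<subseteq> {1..N}" by (auto simp: Phi_def)
  next
    show "{1..N} \<subseteq> (\<lambda>x. fst (snd x)) ` Sigma ?P ?T"
    proof
      fix c assume c: "c \<in> {1..N}"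
      then have "(pos c, (c, s c)) \<in> Sigma ?P ?T" using pos(1) by (auto simp: Phi_mem)
      then show "c \<in> (\<lambda>x. fst (snd x)) ` Sigma ?P ?T" by (rule rev_image_eqI) simp
    qed
  qed
  show ?thesis unfolding Tab_def using svt standard_N_char[OF svt] inj img by blast
qed

lemma Phi_inj:
  "inj_on (\<lambda>(pos, s). Phi N pos s) (Dom P N)"
proof (rule inj_onI, clarify)
  fix pos s pos' s'
  assume d: "(pos, s) \<in> Dom P N" "(pos', s') \<in> Dom P N" and eq: "Phi N pos s = Phi N pos' s'"
  have e: "pos \<in> extensional {1..N}" "pos' \<in> extensional {1..N}" "s \<in> extensional {1..N}" "s' \<in> extensional {1..N}"
    using d unfolding Dom_def PiE_def by auto
  have both: "pos' c = pos c \<and> s' c = s c" if c: "c \<in> {1..N}" for c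
  proof -
    have "(c, s c) \<in> Phi N pos s (pos c)" using c by (simp add: Phi_mem)
    then have "(c, s c) \<in> Phi N pos' s' (pos c)" using eq by simp
    then show ?thesis by (simp add: Phi_mem)
  qed
  show "pos = pos' \<and> s = s'"
    using both extensionalityI[OF e(1) e(2)] extensionalityI[OF e(3) e(4)] by metis
qed



lemma Tab_surj:
  assumes T: "T \<in> Tab lam N"
  shows "\<exists>x\<in>Dom (shifted_diagram lam) N. T = (\<lambda>(pos, s). Phi N pos s) x"
proof -
  let ?P = "shifted_diagram lam"
  let ?S = "Sigma ?P T"
  let ?h = "\<lambda>x::(nat \<times> nat) \<times> letter. fst (snd x)"
  have svt: "shifted_svt lam T" using T unfolding Tab_def by blast
  have ih: "inj_on ?h ?S" "?h ` ?S = {1..N}"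
    using T standard_N_char[OF svt] unfolding Tab_def by auto
  note sv = svt[unfolded shifted_svt_def]
  define g where "g c = the_inv_into ?S ?h c" for c
  have gS: "g c \<in> ?S" and hg: "?h (g c) = c" if "c \<in> {1..N}" for c
    using the_inv_into_into[OF ih(1), of c ?S] f_the_inv_into_f[OF ih(1), of c] that ih(2)
    unfolding g_def by auto
  have gh: "g (?h x) = x" if "x \<in> ?S" for x
    using the_inv_into_f_f[OF ih(1) that] unfolding g_def .
  define pos where "pos c = (if c \<in> {1..N} then fst (g c) else undefined)" for c
  define s where "s c = (if c \<in> {1..N} then snd (snd (g c)) else undefined)" for c
  have gform: "g c = (pos c, (c, s c))" if "c \<in> {1..N}" for c
    using hg[OF that] that unfolding pos_def s_def by (cases "g c") auto
  have posP: "pos c \<in> ?P" and inT: "(c, s c) \<in> T (pos c)" if "c \<in> {1..N}" for c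
    using gS[OF that] gform[OF that] by auto
  have pin: "pos \<in> {1..N} \<rightarrow>\<^sub>E ?P" using posP unfolding pos_def by auto
  have sin: "s \<in> {1..N} \<rightarrow>\<^sub>E UNIV" unfolding s_def by auto
  have char: "(c, b) \<in> T v \<longleftrightarrow> c \<in> {1..N} \<and> pos c = v \<and> b = s c" for c b v
  proof
    assume cb: "(c, b) \<in> T v"
    then have vP: "v \<in> ?P" using sv by blast
    then have x: "(v, (c, b)) \<in> ?S" using cb by simp
    then have c: "c \<in> {1..N}" using ih(2) by force
    have "g c = (v, (c, b))" using gh[OF x] by simp
    then show "c \<in> {1..N} \<and> pos c = v \<and> b = s c" using gform[OF c] c by simp
  next
    assume "c \<in> {1..N} \<and> pos c = v \<and> b = s c"
    then show "(c, b) \<in> T v" using inT by blast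
  qed
  have TPhi: "T = Phi N pos s"
  proof
    fix v
    show "T v = Phi N pos s v"
    proof (rule set_eqI)
      fix x :: letter
      obtain c b where "x = (c, b)" by (cases x)
      then show "x \<in> T v \<longleftrightarrow> x \<in> Phi N pos s v" using char by (simp add: Phi_mem)
    qed
  qed
  have img: "pos ` {1..N} = ?P"
  proof
    show "pos ` {1..N} \<subseteq> ?P" using posP by auto
  next
    show "?P \<subseteq> pos ` {1..N}"
    proof
      fix v assume v: "v \<in> ?P"
      then obtain l where "l \<in> T v" using sv by blast
      then obtain c b where "(c, b) \<in> T v" by (cases l) auto
      then have "c \<in> {1..N}" "pos c = v" using char by auto
      then show "v \<in> pos ` {1..N}" by blast
    qed
  qed
  have mono: "mono_pos N pos" unfolding mono_pos_def
  proof (intro ballI impI)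
    fix c d assume c: "c \<in> {1..N}" and d: "d \<in> {1..N}" and lt: "box_less (pos c) (pos d)"
    have fin: "finite (T (pos c))" "finite (T (pos d))" using sv posP c d by auto
    have "(c, s c) \<le> Max (T (pos c))" using Max_ge[OF fin(1) inT[OF c]] .
    also have "\<dots> \<le> Min (T (pos d))" using sv posP[OF c] posP[OF d] lt by blast
    also have "\<dots> \<le> (d, s d)" using Min_le[OF fin(2) inT[OF d]] .
    finally have "(c, s c) \<le> (d, s d)" .
    then have "c \<le> d" by (auto simp: less_eq_prod_def)
    moreover have "c \<noteq> d" using lt by auto
    ultimately show "c < d" by simp
  qed
  have "(pos, s) \<in> Dom ?P N" unfolding Dom_def using pin img mono sin by blast
  then show ?thesis using TPhi by force
qed

lemma Phi_bij:
  "bij_betw (\<lambda>(pos, s). Phi N pos s) (Dom (shifted_diagram lam) N) (Tab lam N)"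
  unfolding bij_betw_def using Phi_inj Phi_in_Tab Tab_surj by fast



definition ins :: "nat \<Rightarrow> (nat \<Rightarrow> nat \<times> nat) \<Rightarrow> nat \<Rightarrow> nat \<times> nat \<Rightarrow> nat \<Rightarrow> nat \<times> nat" where
  "ins n p k u c = (if c \<le> k then p c else if c = Suc k then u else if c \<le> Suc n then p (c - 1) else undefined)"

definition bet :: "nat \<Rightarrow> nat \<Rightarrow> nat" where
  "bet k c = (if c \<le> k then c else Suc c)"

definition Sig :: "(nat \<times> nat) set \<Rightarrow> ((nat \<Rightarrow> nat \<times> nat) \<times> nat \<times> (nat \<times> nat)) set" where
  "Sig P = (SIGMA p:linext P. SIGMA k:{0..card P}. maxel (p ` {1..k}))"

definition Ext1 :: "(nat \<times> nat) set \<Rightarrow> (nat \<Rightarrow> nat \<times> nat) set" where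
  "Ext1 P = {pos. pos \<in> {1..Suc (card P)} \<rightarrow>\<^sub>E P \<and> pos ` {1..Suc (card P)} = P \<and> mono_pos (Suc (card P)) pos}"

lemma ins_bet: "c \<in> {1..n} \<Longrightarrow> k \<le> n \<Longrightarrow> ins n p k u (bet k c) = p c"
  unfolding ins_def bet_def by auto

lemma ins_Suc: "ins n p k u (Suc k) = u"
  unfolding ins_def by auto

lemma bet_mono: "bet k c < bet k d \<longleftrightarrow> c < d"
  unfolding bet_def by auto

lemma bet_inj: "bet k c = bet k d \<longleftrightarrow> c = d"
  unfolding bet_def by auto

lemma bet_bij: "k \<le> n \<Longrightarrow> bij_betw (bet k) {1..n} ({1..Suc n} - {Suc k})"
  unfolding bij_betw_def
proof
  show "inj_on (bet k) {1..n}" unfolding inj_on_def using bet_inj by blast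
  assume k: "k \<le> n"
  show "bet k ` {1..n} = {1..Suc n} - {Suc k}"
  proof
    show "bet k ` {1..n} \<subseteq> {1..Suc n} - {Suc k}" unfolding bet_def by auto
  next
    show "{1..Suc n} - {Suc k} \<subseteq> bet k ` {1..n}"
    proof
      fix c assume c: "c \<in> {1..Suc n} - {Suc k}"
      show "c \<in> bet k ` {1..n}"
      proof (cases "c \<le> k")
        case True then show ?thesis using c k by (intro rev_image_eqI[of c]) (auto simp: bet_def)
      next
        case False then show ?thesis using c k by (intro rev_image_eqI[of "c - 1"]) (auto simp: bet_def)
      qed
    qed
  qed
qed

lemma split_idx:
  assumes "c \<in> {1..Suc n}" "c \<noteq> Suc k" "k \<le> n"
  shows "\<exists>c'\<in>{1..n}. c = bet k c'"
  using bet_bij[OF assms(3)] assms(1,2) unfolding bij_betw_def by blast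

lemma Sig_D:
  assumes "(p, k, u) \<in> Sig P"
  shows "p \<in> linext P" "k \<le> card P" "u \<in> maxel (p ` {1..k})"
  using assms unfolding Sig_def by auto

lemma maxel_D:
  assumes "u \<in> maxel (p ` {1..k})"
  obtains j where "j \<in> {1..k}" "u = p j" "\<And>c. c \<in> {1..k} \<Longrightarrow> \<not> box_less u (p c)"
  using assms unfolding maxel_def by blast

lemma ins_props:
  assumes x: "(p, k, u) \<in> Sig P"
  defines "n \<equiv> card P"
  shows "ins n p k u \<in> Ext1 P"
    "\<And>c. c \<in> {1..Suc n} \<Longrightarrow> (\<exists>j\<in>{1..Suc n}. j < c \<and> ins n p k u j = ins n p k u c) \<longleftrightarrow> c = Suc k"
proof -
  note S = Sig_D[OF x]
  note L = linextD[OF S(1)]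
  have kn: "k \<le> n" using S(2) n_def by simp
  obtain j where j: "j \<in> {1..k}" "u = p j" and umax: "\<And>c. c \<in> {1..k} \<Longrightarrow> \<not> box_less u (p c)"
    using maxel_D[OF S(3)] by blast
  let ?q = "ins n p k u"
  have pinj: "inj_on p {1..n}" using L(2) n_def unfolding bij_betw_def by simp
  have pimg: "p ` {1..n} = P" using L(2) n_def unfolding bij_betw_def by simp
  have pmono: "\<And>c d. c \<in> {1..n} \<Longrightarrow> d \<in> {1..n} \<Longrightarrow> box_less (p c) (p d) \<Longrightarrow> c < d"
    using L(3) n_def by simp
  have uP: "u \<in> P" using j pimg kn by auto
  have qb: "?q (bet k c) = p c" if "c \<in> {1..n}" for c using ins_bet[OF that kn] .
  have qS: "?q (Suc k) = u" by (rule ins_Suc)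
  have qj: "?q j = u" using j unfolding ins_def by auto
  have sp: "\<exists>c'\<in>{1..n}. c = bet k c'" if "c \<in> {1..Suc n}" "c \<noteq> Suc k" for c
    using split_idx[OF that kn] .
  have pin: "?q \<in> {1..Suc n} \<rightarrow>\<^sub>E P"
  proof
    fix c assume c: "c \<in> {1..Suc n}"
    show "?q c \<in> P"
    proof (cases "c = Suc k")
      case True then show ?thesis using qS uP by simp
    next
      case False
      then obtain c' where "c' \<in> {1..n}" "c = bet k c'" using sp c by blast
      then show ?thesis using qb pimg by auto
    qed
  next
    fix c assume "c \<notin> {1..Suc n}"
    then have "c = 0 \<or> c > Suc n" by auto
    then show "?q c = undefined"
    proof
      assume "c = 0"
      moreover have "p 0 = undefined" using L(1) by (auto simp: PiE_def extensional_def)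
      ultimately show ?thesis unfolding ins_def by auto
    next
      assume "c > Suc n" then show ?thesis using kn unfolding ins_def by auto
    qed
  qed
  have img: "?q ` {1..Suc n} = P"
  proof
    show "?q ` {1..Suc n} \<subseteq> P" using pin by auto
  next
    show "P \<subseteq> ?q ` {1..Suc n}"
    proof
      fix v assume "v \<in> P"
      then obtain c where c: "c \<in> {1..n}" "v = p c" using pimg by auto
      then have "bet k c \<in> {1..Suc n}" unfolding bet_def by auto
      then show "v \<in> ?q ` {1..Suc n}" using qb[OF c(1)] c(2) by (intro rev_image_eqI[of "bet k c"]) auto
    qed
  qed
  have mono: "mono_pos (Suc n) ?q" unfolding mono_pos_def
  proof (intro ballI impI)
    fix c d assume c: "c \<in> {1..Suc n}" and d: "d \<in> {1..Suc n}" and lt: "box_less (?q c) (?q d)"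
    show "c < d"
    proof (cases "c = Suc k")
      case cT: True
      show ?thesis
      proof (cases "d = Suc k")
        case True then show ?thesis using lt cT by simp
      next
        case False
        then obtain d' where d': "d' \<in> {1..n}" "d = bet k d'" using sp d by blast
        have "box_less u (p d')" using lt cT qS qb[OF d'(1)] d'(2) by simp
        then have "\<not> d' \<le> k" using umax d'(1) by auto
        then show ?thesis using cT d'(2) unfolding bet_def by auto
      qed
    next
      case cF: False
      then obtain c' where c': "c' \<in> {1..n}" "c = bet k c'" using sp c by blast
      show ?thesis
      proof (cases "d = Suc k")
        case True
        have "box_less (p c') (p j)" using lt True qS qb[OF c'(1)] c'(2) j(2) by simp
        then have "c' < j" using pmono c'(1) j(1) kn by auto
        then show ?thesis using True c'(2) j(1) unfolding bet_def by auto
      next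
        case False
        then obtain d' where d': "d' \<in> {1..n}" "d = bet k d'" using sp d by blast
        have "box_less (p c') (p d')" using lt qb[OF c'(1)] qb[OF d'(1)] c'(2) d'(2) by simp
        then have "c' < d'" using pmono c'(1) d'(1) by blast
        then show ?thesis using c'(2) d'(2) bet_mono by simp
      qed
    qed
  qed
  show "?q \<in> Ext1 P" unfolding Ext1_def using pin img mono n_def by simp
  fix c assume c: "c \<in> {1..Suc n}"
  show "(\<exists>j\<in>{1..Suc n}. j < c \<and> ?q j = ?q c) \<longleftrightarrow> c = Suc k"
  proof
    assume "c = Suc k"
    then show "\<exists>j\<in>{1..Suc n}. j < c \<and> ?q j = ?q c" using j qj qS kn by (intro bexI[of _ j]) auto
  next
    assume "\<exists>i\<in>{1..Suc n}. i < c \<and> ?q i = ?q c"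
    then obtain i where i: "i \<in> {1..Suc n}" "i < c" "?q i = ?q c" by blast
    show "c = Suc k"
    proof (rule ccontr)
      assume cF: "c \<noteq> Suc k"
      then obtain c' where c': "c' \<in> {1..n}" "c = bet k c'" using sp c by blast
      show False
      proof (cases "i = Suc k")
        case True
        then have "p j = p c'" using i(3) qS qb[OF c'(1)] c'(2) j(2) by simp
        then have "j = c'" using inj_onD[OF pinj] j(1) c'(1) kn by auto
        then show False using True i(2) c'(2) j(1) unfolding bet_def by auto
      next
        case False
        then obtain i' where i': "i' \<in> {1..n}" "i = bet k i'" using sp i(1) by blast
        then have "p i' = p c'" using i(3) qb[OF c'(1)] qb[OF i'(1)] c'(2) by simp
        then have "i' = c'" using inj_onD[OF pinj] i'(1) c'(1) by auto
        then show False using i(2) i'(2) c'(2) by simp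
      qed
    qed
  qed
qed



lemma ins_inj: "inj_on (\<lambda>(p, k, u). ins (card P) p k u) (Sig P)"
proof (rule inj_onI)
  fix y y' assume y: "y \<in> Sig P" "y' \<in> Sig P"
    and yeq: "(\<lambda>(p, k, u). ins (card P) p k u) y = (\<lambda>(p, k, u). ins (card P) p k u) y'"
  obtain p k u where yy: "y = (p, k, u)" by (cases y) auto
  obtain p' k' u' where yy': "y' = (p', k', u')" by (cases y') auto
  have x: "(p, k, u) \<in> Sig P" and x': "(p', k', u') \<in> Sig P" using y yy yy' by auto
  have eq: "ins (card P) p k u = ins (card P) p' k' u'" using yeq yy yy' by simp
  let ?n = "card P"
  have kn: "k \<le> ?n" "k' \<le> ?n" using Sig_D[OF x] Sig_D[OF x'] by auto
  have "Suc k \<in> {1..Suc ?n}" using kn by auto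
  then have "Suc k = Suc k'" using ins_props(2)[OF x, of "Suc k"] ins_props(2)[OF x', of "Suc k"] eq by simp
  then have kk: "k = k'" by simp
  have uu: "u = u'" using eq kk ins_Suc[of ?n p k u] ins_Suc[of ?n p' k' u'] by metis
  have "p = p'"
  proof (rule extensionalityI[of _ "{1..?n}"])
    show "p \<in> extensional {1..?n}" "p' \<in> extensional {1..?n}"
      using linextD(1)[OF Sig_D(1)[OF x]] linextD(1)[OF Sig_D(1)[OF x']] by (auto simp: PiE_def)
  next
    fix c assume c: "c \<in> {1..?n}"
    show "p c = p' c" using ins_bet[OF c kn(1), of p u] ins_bet[OF c kn(2), of p' u'] eq kk by metis
  qed
  then show "y = y'" using kk uu yy yy' by simp
qed

lemma ins_surj:
  assumes fin: "finite P" and pos: "pos \<in> Ext1 P"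
  shows "\<exists>x\<in>Sig P. pos = (\<lambda>(p, k, u). ins (card P) p k u) x"
proof -
  let ?n = "card P"
  have pin: "pos \<in> {1..Suc ?n} \<rightarrow>\<^sub>E P" and pimg: "pos ` {1..Suc ?n} = P" and pm: "mono_pos (Suc ?n) pos"
    using pos unfolding Ext1_def by auto
  have "\<not> inj_on pos {1..Suc ?n}"
  proof
    assume "inj_on pos {1..Suc ?n}"
    then have "card (pos ` {1..Suc ?n}) = Suc ?n" by (simp add: card_image)
    then show False using pimg by simp
  qed
  then obtain a b where ab0: "a \<in> {1..Suc ?n}" "b \<in> {1..Suc ?n}" "a \<noteq> b" "pos a = pos b"
    unfolding inj_on_def by blast
  obtain a b where ab: "a \<in> {1..Suc ?n}" "b \<in> {1..Suc ?n}" "a < b" "pos a = pos b"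
  proof (cases "a < b")
    case True then show ?thesis using that ab0 by blast
  next
    case False then show ?thesis using that[of b a] ab0 by auto
  qed
  define k where "k = b - 1"
  have bk: "b = Suc k" using ab unfolding k_def by auto
  have kn: "k \<le> ?n" using ab bk by auto
  define u where "u = pos b"
  define p where "p c = (if c \<in> {1..?n} then pos (bet k c) else undefined)" for c
  have pb: "p c = pos (bet k c)" if "c \<in> {1..?n}" for c using that unfolding p_def by simp
  have bb: "bij_betw (bet k) {1..?n} ({1..Suc ?n} - {Suc k})" by (rule bet_bij[OF kn])
  have pimg2: "p ` {1..?n} = P"
  proof -
    have "p ` {1..?n} = pos ` (bet k ` {1..?n})" using pb by (auto simp: image_image)
    also have "\<dots> = pos ` ({1..Suc ?n} - {Suc k})" using bb unfolding bij_betw_def by simp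
    also have "\<dots> = P"
    proof
      show "pos ` ({1..Suc ?n} - {Suc k}) \<subseteq> P" using pimg by auto
    next
      show "P \<subseteq> pos ` ({1..Suc ?n} - {Suc k})"
      proof
        fix v assume "v \<in> P"
        then have "v \<in> pos ` {1..Suc ?n}" using pimg by simp
        then obtain c where c: "c \<in> {1..Suc ?n}" "v = pos c" by blast
        show "v \<in> pos ` ({1..Suc ?n} - {Suc k})"
        proof (cases "c = Suc k")
          case True then show ?thesis using c ab bk by (intro rev_image_eqI[of a]) auto
        next
          case False then show ?thesis using c by auto
        qed
      qed
    qed
    finally show ?thesis .
  qed
  have pinj: "inj_on p {1..?n}" using pimg2 by (simp add: eq_card_imp_inj_on)
  have pl: "p \<in> linext P" unfolding linext_def
  proof (intro CollectI conjI ballI impI)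
    show "p \<in> {1..?n} \<rightarrow>\<^sub>E P" using pimg2 unfolding p_def by auto
    show "bij_betw p {1..?n} P" unfolding bij_betw_def using pinj pimg2 by simp
  next
    fix c d assume c: "c \<in> {1..?n}" and d: "d \<in> {1..?n}" and lt: "box_less (p c) (p d)"
    have "bet k c \<in> {1..Suc ?n}" "bet k d \<in> {1..Suc ?n}" using c d unfolding bet_def by auto
    then have "bet k c < bet k d" using pm lt pb[OF c] pb[OF d] unfolding mono_pos_def by simp
    then show "c < d" using bet_mono by simp
  qed
  have um: "u \<in> maxel (p ` {1..k})"
  proof -
    have a_le: "a \<le> k" using ab bk by simp
    have "p a = pos a" using pb[of a] ab a_le unfolding bet_def by auto
    then have uin: "u \<in> p ` {1..k}" using ab a_le unfolding u_def by (intro rev_image_eqI[of a]) auto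
    have "\<not> box_less u q" if q: "q \<in> p ` {1..k}" for q
    proof
      assume lt: "box_less u q"
      obtain c where c: "c \<in> {1..k}" "q = p c" using q by blast
      have "p c = pos c" using pb[of c] c kn unfolding bet_def by auto
      then have "b < c" using pm lt ab c kn unfolding mono_pos_def u_def by auto
      then show False using c bk by simp
    qed
    then show ?thesis using uin unfolding maxel_def by blast
  qed
  have sig: "(p, k, u) \<in> Sig P" unfolding Sig_def using pl kn um by simp
  have "ins ?n p k u = pos"
  proof
    fix c
    show "ins ?n p k u c = pos c"
    proof (cases "c \<in> {1..Suc ?n}")
      case False
      have "ins ?n p k u c = undefined"
        using ins_props(1)[OF sig] False unfolding Ext1_def PiE_def extensional_def by blast
      then show ?thesis using pin False unfolding PiE_def extensional_def by simp
    next
      case True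
      show ?thesis
      proof (cases "c = Suc k")
        case cT: True then show ?thesis using ins_Suc bk unfolding u_def by simp
      next
        case cF: False
        obtain c' where c': "c' \<in> {1..?n}" "c = bet k c'" using split_idx[OF True cF kn] by blast
        then show ?thesis using ins_bet[OF c'(1) kn] pb[OF c'(1)] by simp
      qed
    qed
  qed
  then show ?thesis using sig by force
qed

lemma ins_bij:
  assumes "finite P"
  shows "bij_betw (\<lambda>(p, k, u). ins (card P) p k u) (Sig P) (Ext1 P)"
  unfolding bij_betw_def
proof
  show "inj_on (\<lambda>(p, k, u). ins (card P) p k u) (Sig P)" by (rule ins_inj)
  show "(\<lambda>(p, k, u). ins (card P) p k u) ` Sig P = Ext1 P"
  proof
    show "(\<lambda>(p, k, u). ins (card P) p k u) ` Sig P \<subseteq> Ext1 P"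
    proof
      fix q assume "q \<in> (\<lambda>(p, k, u). ins (card P) p k u) ` Sig P"
      then obtain p k u where "(p, k, u) \<in> Sig P" "q = ins (card P) p k u" by auto
      then show "q \<in> Ext1 P" using ins_props(1) by simp
    qed
  next
    show "Ext1 P \<subseteq> (\<lambda>(p, k, u). ins (card P) p k u) ` Sig P"
    proof
      fix q assume "q \<in> Ext1 P"
      then obtain x where "x \<in> Sig P" "q = (\<lambda>(p, k, u). ins (card P) p k u) x"
        using ins_surj[OF assms] by blast
      then show "q \<in> (\<lambda>(p, k, u). ins (card P) p k u) ` Sig P" by blast
    qed
  qed
qed

lemma ins_sum:
  fixes f :: "nat \<times> nat \<Rightarrow> 'a::comm_monoid_add"
  assumes x: "(p, k, u) \<in> Sig P"
  shows "(\<Sum>c\<in>{1..Suc (card P)}. f (ins (card P) p k u c)) = f u + (\<Sum>v\<in>P. f v)"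
proof -
  let ?n = "card P"
  have kn: "k \<le> ?n" using Sig_D[OF x] by simp
  have L: "bij_betw p {1..?n} P" using linextD(2)[OF Sig_D(1)[OF x]] .
  have "(\<Sum>c\<in>{1..Suc ?n}. f (ins ?n p k u c)) = f (ins ?n p k u (Suc k)) + (\<Sum>c\<in>{1..Suc ?n} - {Suc k}. f (ins ?n p k u c))"
    using kn by (intro sum.remove) auto
  also have "(\<Sum>c\<in>{1..Suc ?n} - {Suc k}. f (ins ?n p k u c)) = (\<Sum>c\<in>{1..?n}. f (ins ?n p k u (bet k c)))"
    using sum.reindex_bij_betw[OF bet_bij[OF kn], of "\<lambda>c. f (ins ?n p k u c)"] by simp
  also have "\<dots> = (\<Sum>c\<in>{1..?n}. f (p c))" using ins_bet[OF _ kn] by (intro sum.cong) auto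
  also have "\<dots> = (\<Sum>v\<in>P. f v)" using sum.reindex_bij_betw[OF L, of f] .
  finally show ?thesis using ins_Suc by simp
qed

lemma ins_prod:
  fixes f :: "nat \<times> nat \<Rightarrow> 'a::comm_monoid_mult"
  assumes x: "(p, k, u) \<in> Sig P"
  shows "(\<Prod>c\<in>{1..Suc (card P)}. f (ins (card P) p k u c)) = f u * (\<Prod>v\<in>P. f v)"
proof -
  let ?n = "card P"
  have kn: "k \<le> ?n" using Sig_D[OF x] by simp
  have L: "bij_betw p {1..?n} P" using linextD(2)[OF Sig_D(1)[OF x]] .
  have "(\<Prod>c\<in>{1..Suc ?n}. f (ins ?n p k u c)) = f (ins ?n p k u (Suc k)) * (\<Prod>c\<in>{1..Suc ?n} - {Suc k}. f (ins ?n p k u c))"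
    using kn by (intro prod.remove) auto
  also have "(\<Prod>c\<in>{1..Suc ?n} - {Suc k}. f (ins ?n p k u c)) = (\<Prod>c\<in>{1..?n}. f (ins ?n p k u (bet k c)))"
    using prod.reindex_bij_betw[OF bet_bij[OF kn], of "\<lambda>c. f (ins ?n p k u c)"] by simp
  also have "\<dots> = (\<Prod>c\<in>{1..?n}. f (p c))" using ins_bet[OF _ kn] by (intro prod.cong) auto
  also have "\<dots> = (\<Prod>v\<in>P. f v)" using prod.reindex_bij_betw[OF L, of f] .
  finally show ?thesis using ins_Suc by simp
qed



lemma diagram_Sigma: "shifted_diagram lam = Sigma {1..length lam} (\<lambda>i. {i..<i + lam ! (i - 1)})"
  unfolding shifted_diagram_def by auto

lemma card_diagram: "card (shifted_diagram lam) = size_part lam"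
proof -
  have "card (shifted_diagram lam) = (\<Sum>i=1..length lam. lam ! (i - 1))"
    unfolding diagram_Sigma by (simp add: card_SigmaI)
  also have "\<dots> = (\<Sum>i<length lam. lam ! i)"
  proof -
    have "(\<Sum>i<length lam. lam ! i) = (\<Sum>i=1..length lam. lam ! (i - 1))"
      by (rule sum.reindex_bij_witness[of _ "\<lambda>i. i - 1" "Suc"]) auto
    then show ?thesis by simp
  qed
  also have "\<dots> = sum_list lam" by (simp add: sum_list_sum_nth atLeast0LessThan)
  finally show ?thesis unfolding size_part_def .
qed

lemma diag_in_diagram:
  assumes "strict_partition lam"
  shows "(i, i) \<in> shifted_diagram lam \<longleftrightarrow> i \<in> {1..length lam}"
proof
  assume "(i, i) \<in> shifted_diagram lam" then show "i \<in> {1..length lam}" unfolding shifted_diagram_def by auto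
next
  assume i: "i \<in> {1..length lam}"
  then have "lam ! (i - 1) \<in> set lam" by auto
  then have "0 < lam ! (i - 1)" using assms unfolding strict_partition_def by blast
  then show "(i, i) \<in> shifted_diagram lam" using i unfolding shifted_diagram_def by auto
qed

lemma card_diag:
  assumes "strict_partition lam"
  shows "card {v\<in>shifted_diagram lam. fst v = snd v} = length lam"
proof -
  have "{v\<in>shifted_diagram lam. fst v = snd v} = (\<lambda>i. (i, i)) ` {1..length lam}"
    using diag_in_diagram[OF assms] by force
  moreover have "inj_on (\<lambda>i. (i, i)) {1..length lam}" unfolding inj_on_def by auto
  ultimately show ?thesis by (simp add: card_image)
qed

lemma len_le_size:
  assumes "strict_partition lam"
  shows "length lam \<le> size_part lam"
proof -
  have "length lam = card {v\<in>shifted_diagram lam. fst v = snd v}" using card_diag[OF assms] by simp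
  also have "\<dots> \<le> card (shifted_diagram lam)" using finite_diagram by (intro card_mono) auto
  finally show ?thesis using card_diagram by simp
qed

lemma card_filter_sum: "finite A \<Longrightarrow> card {c\<in>A. Q c} = (\<Sum>c\<in>A. if Q c then 1 else 0)"
  using sum.inter_filter[of A "\<lambda>_. 1::nat" Q] by simp

lemma card_Phi: "card (Phi N pos s v) = card {c\<in>{1..N}. pos c = v}"
proof -
  have "inj_on (\<lambda>c. (c, s c)) {c\<in>{1..N}. pos c = v}" unfolding inj_on_def by auto
  then show ?thesis unfolding Phi_def by (simp add: card_image)
qed

lemma sum_fibres:
  assumes "finite P" "\<forall>c\<in>{1..N}. pos c \<in> P"
  shows "(\<Sum>v\<in>P. card {c\<in>{1..N}. pos c = v}) = N"
proof -
  have "(\<Sum>v\<in>P. card {c\<in>{1..N}. pos c = v}) = (\<Sum>v\<in>P. \<Sum>c\<in>{1..N}. if pos c = v then 1 else 0)"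
    by (rule sum.cong[OF refl], rule card_filter_sum) simp
  also have "\<dots> = (\<Sum>c\<in>{1..N}. \<Sum>v\<in>P. if pos c = v then 1 else 0)" by (rule sum.swap)
  also have "\<dots> = (\<Sum>c\<in>{1..N}. 1)"
    using assms by (intro sum.cong) (auto simp: sum.delta)
  finally show ?thesis by simp
qed

lemma fibre_ins:
  assumes x: "(p, k, u) \<in> Sig P" and fin: "finite P" and v: "v \<in> P"
  shows "card {c\<in>{1..Suc (card P)}. ins (card P) p k u c = v} = (if u = v then 2 else 1)"
proof -
  have "card {c\<in>{1..Suc (card P)}. ins (card P) p k u c = v}
      = (\<Sum>c\<in>{1..Suc (card P)}. (\<lambda>w. if w = v then 1 else 0) (ins (card P) p k u c))"
    by (rule card_filter_sum) simp
  also have "\<dots> = (if u = v then 1 else 0) + (\<Sum>w\<in>P. if w = v then 1 else 0)"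
    by (rule ins_sum[OF x])
  also have "\<dots> = (if u = v then 2 else 1)" using fin v by (simp add: sum.delta)
  finally show ?thesis .
qed

lemma fibre_bij:
  assumes "bij_betw p {1..N::nat} P" "v \<in> P"
  shows "card {c\<in>{1..N}. p c = v} = 1"
proof -
  have "card {c\<in>{1..N}. p c = v} = (\<Sum>c\<in>{1..N}. (\<lambda>w. if w = v then 1 else 0) (p c))"
    by (rule card_filter_sum) simp
  also have "\<dots> = (\<Sum>w\<in>P. if w = v then 1 else 0)" by (rule sum.reindex_bij_betw[OF assms(1)])
  also have "\<dots> = 1" using assms(2) bij_betw_finite[of p "{1..N}" P] assms(1) by (simp add: sum.delta)
  finally show ?thesis .
qed



definition SQ :: "bool \<Rightarrow> nat \<Rightarrow> (nat \<Rightarrow> nat \<times> nat) \<Rightarrow> (nat \<Rightarrow> bool) set" where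
  "SQ Q n pos = (\<Pi>\<^sub>E c\<in>{1..Suc n}. if Q \<and> fst (pos c) = snd (pos c) then {False} else UNIV)"

definition AQ :: "bool \<Rightarrow> nat list \<Rightarrow> (nat \<times> nat \<Rightarrow> letter set) set" where
  "AQ Q lam = {T. shifted_svt lam T \<and> standard_svt lam T \<and> barely_set_valued lam T
                 \<and> (Q \<longrightarrow> diagonally_unprimed lam T)}"

lemma DQ_sub:
  assumes "pos \<in> Ext1 P" "s \<in> SQ Q (card P) pos"
  shows "(pos, s) \<in> Dom P (Suc (card P))"
  using assms unfolding Ext1_def Dom_def SQ_def PiE_def Pi_def by auto

lemma AQ_eq:
  assumes sp: "strict_partition lam"
  defines "P \<equiv> shifted_diagram lam"
  shows "AQ Q lam = (\<lambda>(pos, s). Phi (Suc (card P)) pos s) ` (SIGMA pos:Ext1 P. SQ Q (card P) pos)"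
proof
  let ?n = "card P"
  have fin: "finite P" unfolding P_def by (rule finite_diagram)
  show "AQ Q lam \<subseteq> (\<lambda>(pos, s). Phi (Suc ?n) pos s) ` (SIGMA pos:Ext1 P. SQ Q ?n pos)"
  proof
    fix T assume T: "T \<in> AQ Q lam"
    then have svt: "shifted_svt lam T" and std: "standard_svt lam T" and bar: "barely_set_valued lam T"
      and dg: "Q \<longrightarrow> diagonally_unprimed lam T"
      unfolding AQ_def by auto
    obtain N where "monomial_svt lam T = mset_set {1..N}" using std unfolding standard_svt_def by blast
    then have "T \<in> Tab lam N" unfolding Tab_def using svt by blast
    then have ex: "\<exists>x\<in>Dom P N. T = (\<lambda>(pos, s). Phi N pos s) x" unfolding P_def by (rule Tab_surj)
    then obtain x where x: "x \<in> Dom P N" "T = (\<lambda>(pos, s). Phi N pos s) x" by (rule bexE)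
    obtain pos s where xx: "x = (pos, s)" by (cases x)
    have d: "(pos, s) \<in> Dom P N" and Tps: "T = Phi N pos s" using x xx by auto
    have pin: "pos \<in> {1..N} \<rightarrow>\<^sub>E P" "pos ` {1..N} = P" "mono_pos N pos" and sin: "s \<in> {1..N} \<rightarrow>\<^sub>E UNIV"
      using d unfolding Dom_def by auto
    have b1: "\<exists>!v. v \<in> P \<and> card (T v) = 2"
      using bar unfolding barely_set_valued_def P_def by (rule conjunct1)
    have b2: "\<forall>v\<in>P. card (T v) = 1 \<or> card (T v) = 2"
      using bar unfolding barely_set_valued_def P_def by (rule conjunct2)
    from b1 obtain u where u0: "u \<in> P \<and> card (T u) = 2" and uu0: "\<forall>v. v \<in> P \<and> card (T v) = 2 \<longrightarrow> v = u"
      by (rule ex1E) (intro that, assumption, blast)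
    have u: "u \<in> P" "card (T u) = 2" using u0 by auto
    have uu: "\<And>v. v \<in> P \<Longrightarrow> card (T v) = 2 \<Longrightarrow> v = u" by (intro uu0[rule_format] conjI)
    have c12: "\<And>v. v \<in> P \<Longrightarrow> card (T v) = 1 \<or> card (T v) = 2" by (rule b2[rule_format])
    have cv: "card {c\<in>{1..N}. pos c = v} = (if v = u then 2 else 1)" if v: "v \<in> P" for v
    proof -
      have "card (T v) = (if v = u then 2 else 1)"
      proof (cases "v = u")
        case True then show ?thesis using u(2) by simp
      next
        case False
        then have "card (T v) \<noteq> 2" using uu[OF v] by metis
        then show ?thesis using c12[OF v] False by simp
      qed
      then show ?thesis using card_Phi[of N pos s v] Tps by simp
    qed
    have "N = (\<Sum>v\<in>P. card {c\<in>{1..N}. pos c = v})"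
      using sum_fibres[OF fin] pin(1) by (simp add: PiE_def Pi_def)
    also have "\<dots> = (\<Sum>v\<in>P. 1 + (if v = u then 1 else 0))" using cv by (intro sum.cong) auto
    also have "\<dots> = (\<Sum>v\<in>P. 1) + (\<Sum>v\<in>P. if v = u then 1 else 0)" by (rule sum.distrib)
    also have "\<dots> = Suc ?n" using u(1) fin by (simp add: sum.delta)
    finally have N: "N = Suc ?n" .
    have e1: "pos \<in> Ext1 P" unfolding Ext1_def using pin N by simp
    have s1: "s \<in> SQ Q ?n pos" unfolding SQ_def
    proof
      fix c assume c: "c \<in> {1..Suc ?n}"
      show "s c \<in> (if Q \<and> fst (pos c) = snd (pos c) then {False} else UNIV)"
      proof (cases "Q \<and> fst (pos c) = snd (pos c)")
        case True
        then obtain i where i: "pos c = (i, i)" by (metis prod.collapse)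
        have "pos c \<in> P" using pin(1) c N by auto
        moreover have "(c, s c) \<in> T (pos c)" using Tps c N by (simp add: Phi_mem)
        ultimately have "\<not> s c" using dg True i unfolding diagonally_unprimed_def P_def by fastforce
        then show ?thesis using True by simp
      qed auto
    next
      fix c assume "c \<notin> {1..Suc ?n}" then show "s c = undefined" using sin N unfolding PiE_def extensional_def by simp
    qed
    show "T \<in> (\<lambda>(pos, s). Phi (Suc ?n) pos s) ` (SIGMA pos:Ext1 P. SQ Q ?n pos)"
      using e1 s1 Tps N by (intro rev_image_eqI[of "(pos, s)"]) auto
  qed
next
  let ?n = "card P"
  have fin: "finite P" unfolding P_def by (rule finite_diagram)
  show "(\<lambda>(pos, s). Phi (Suc ?n) pos s) ` (SIGMA pos:Ext1 P. SQ Q ?n pos) \<subseteq> AQ Q lam"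
  proof
    fix T assume "T \<in> (\<lambda>(pos, s). Phi (Suc ?n) pos s) ` (SIGMA pos:Ext1 P. SQ Q ?n pos)"
    then obtain pos s where ps: "pos \<in> Ext1 P" "s \<in> SQ Q ?n pos" and Tps: "T = Phi (Suc ?n) pos s" by auto
    have "(pos, s) \<in> Dom P (Suc ?n)" by (rule DQ_sub[OF ps])
    then have "T \<in> Tab lam (Suc ?n)" using Phi_in_Tab Tps unfolding P_def by simp
    then have svt: "shifted_svt lam T" and std: "standard_svt lam T"
      unfolding Tab_def standard_svt_def by auto
    obtain x where x: "x \<in> Sig P" "pos = (\<lambda>(p, k, u). ins (card P) p k u) x"
      using ins_surj[OF fin ps(1)] by blast
    obtain p k u where xx: "x = (p, k, u)" by (cases x) auto
    have xS: "(p, k, u) \<in> Sig P" using x xx by simp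
    have uP: "u \<in> P" using Sig_D[OF xS] maxel_D linextD(2)[OF Sig_D(1)[OF xS]]
      unfolding bij_betw_def maxel_def by auto
    have cT: "card (T v) = (if u = v then 2 else 1)" if "v \<in> P" for v
      using fibre_ins[OF xS fin that] card_Phi[of "Suc ?n" pos s v] Tps x xx by simp
    have bar: "barely_set_valued lam T" unfolding barely_set_valued_def
    proof
      show "\<exists>!v. v \<in> shifted_diagram lam \<and> card (T v) = 2"
        using cT uP unfolding P_def by (intro ex1I[of _ u]) (auto split: if_splits)
      show "\<forall>v\<in>shifted_diagram lam. card (T v) = 1 \<or> card (T v) = 2"
        using cT unfolding P_def by simp
    qed
    have dg: "Q \<longrightarrow> diagonally_unprimed lam T"
    proof
      assume Q
      show "diagonally_unprimed lam T" unfolding diagonally_unprimed_def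
      proof (intro allI impI ballI)
        fix i cb assume i: "(i, i) \<in> shifted_diagram lam" and cb: "cb \<in> T (i, i)"
        obtain c b where cbb: "cb = (c, b)" by (cases cb)
        then have c: "c \<in> {1..Suc ?n}" "pos c = (i, i)" "b = s c" using cb Tps by (auto simp: Phi_mem)
        have "s c \<in> (if Q \<and> fst (pos c) = snd (pos c) then {False} else UNIV)"
          using ps(2) c(1) unfolding SQ_def PiE_def Pi_def by blast
        then show "\<not> snd cb" using \<open>Q\<close> c cbb by simp
      qed
    qed
    show "T \<in> AQ Q lam" unfolding AQ_def using svt std bar dg by blast
  qed
qed

lemma card_AQ:
  assumes sp: "strict_partition lam"
  defines "P \<equiv> shifted_diagram lam"
  shows "card (AQ Q lam) = (\<Sum>pos\<in>Ext1 P. card (SQ Q (card P) pos))"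
proof -
  have fin: "finite P" unfolding P_def by (rule finite_diagram)
  have "inj_on (\<lambda>(pos, s). Phi (Suc (card P)) pos s) (SIGMA pos:Ext1 P. SQ Q (card P) pos)"
    by (rule inj_on_subset[OF Phi_inj]) (use DQ_sub in auto)
  then have "card (AQ Q lam) = card (SIGMA pos:Ext1 P. SQ Q (card P) pos)"
    unfolding AQ_eq[OF sp] P_def by (simp add: card_image)
  also have "\<dots> = (\<Sum>pos\<in>Ext1 P. card (SQ Q (card P) pos))"
  proof (rule card_SigmaI)
    have "Ext1 P \<subseteq> {1..Suc (card P)} \<rightarrow>\<^sub>E P" unfolding Ext1_def by auto
    then show "finite (Ext1 P)" using finite_PiE[OF _ fin] finite_subset by blast
    show "\<forall>pos\<in>Ext1 P. finite (SQ Q (card P) pos)" unfolding SQ_def by (auto intro!: finite_PiE)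
  qed
  finally show ?thesis .
qed



lemma g_eq:
  assumes sp: "strict_partition lam"
  shows "g_shifted lam = card (linext (shifted_diagram lam))"
proof -
  let ?P = "shifted_diagram lam"
  let ?n = "card ?P"
  let ?G = "{T. shifted_svt lam T \<and> standard_svt lam T \<and>
      (\<forall>u\<in>?P. card (T u) = 1) \<and> (\<forall>u\<in>?P. \<forall>c\<in>T u. \<not> snd c)}"
  define s0 where "s0 c = (if c \<in> {1..?n} then False else undefined)" for c
  have fin: "finite ?P" by (rule finite_diagram)
  have dom: "(p, s0) \<in> Dom ?P ?n" if p: "p \<in> linext ?P" for p
    using linextD[OF p] unfolding Dom_def mono_pos_def bij_betw_def s0_def by auto
  have bij: "bij_betw (\<lambda>p. Phi ?n p s0) (linext ?P) ?G"
    unfolding bij_betw_def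
  proof
    show "inj_on (\<lambda>p. Phi ?n p s0) (linext ?P)"
    proof (rule inj_onI)
      fix p q assume p: "p \<in> linext ?P" and q: "q \<in> linext ?P" and eq: "Phi ?n p s0 = Phi ?n q s0"
      have "(p, s0) = (q, s0)"
        using inj_onD[OF Phi_inj[of ?n ?P] _ dom[OF p] dom[OF q]] eq by simp
      then show "p = q" by simp
    qed
    show "(\<lambda>p. Phi ?n p s0) ` linext ?P = ?G"
    proof
      show "(\<lambda>p. Phi ?n p s0) ` linext ?P \<subseteq> ?G"
      proof
        fix T assume "T \<in> (\<lambda>p. Phi ?n p s0) ` linext ?P"
        then obtain p where p: "p \<in> linext ?P" and Tp: "T = Phi ?n p s0" by blast
        have "T \<in> Tab lam ?n" using Phi_in_Tab[OF dom[OF p]] Tp by simp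
        then have svt: "shifted_svt lam T" and std: "standard_svt lam T"
          unfolding Tab_def standard_svt_def by auto
        have c1: "\<forall>u\<in>?P. card (T u) = 1"
          using fibre_bij[OF linextD(2)[OF p]] card_Phi Tp by simp
        have np: "\<forall>u\<in>?P. \<forall>c\<in>T u. \<not> snd c"
        proof (intro ballI)
          fix u cb assume "cb \<in> T u"
          then obtain c b where "cb = (c, b)" "c \<in> {1..?n}" "b = s0 c" using Tp
            by (cases cb) (auto simp: Phi_mem)
          then show "\<not> snd cb" unfolding s0_def by simp
        qed
        show "T \<in> ?G" using svt std c1 np by blast
      qed
    next
      show "?G \<subseteq> (\<lambda>p. Phi ?n p s0) ` linext ?P"
      proof
        fix T assume T: "T \<in> ?G"
        then have svt: "shifted_svt lam T" and std: "standard_svt lam T"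
          and c1: "\<forall>u\<in>?P. card (T u) = 1" and np: "\<forall>u\<in>?P. \<forall>c\<in>T u. \<not> snd c" by auto
        obtain N where "monomial_svt lam T = mset_set {1..N}" using std unfolding standard_svt_def by blast
        then have "T \<in> Tab lam N" unfolding Tab_def using svt by blast
        then have ex: "\<exists>x\<in>Dom ?P N. T = (\<lambda>(pos, s). Phi N pos s) x" by (rule Tab_surj)
        then obtain x where x: "x \<in> Dom ?P N" "T = (\<lambda>(pos, s). Phi N pos s) x" by (rule bexE)
        obtain pos s where xx: "x = (pos, s)" by (cases x)
        have d: "(pos, s) \<in> Dom ?P N" and Tps: "T = Phi N pos s" using x xx by auto
        have pin: "pos \<in> {1..N} \<rightarrow>\<^sub>E ?P" "pos ` {1..N} = ?P" "mono_pos N pos" and sin: "s \<in> {1..N} \<rightarrow>\<^sub>E UNIV"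
          using d unfolding Dom_def by auto
        have cv: "card {c\<in>{1..N}. pos c = v} = 1" if v: "v \<in> ?P" for v
          using c1 v card_Phi[of N pos s v] Tps by simp
        have "N = (\<Sum>v\<in>?P. card {c\<in>{1..N}. pos c = v})"
          using sum_fibres[OF fin] pin(1) by (simp add: PiE_def Pi_def)
        also have "\<dots> = (\<Sum>v\<in>?P. 1)" using cv by (intro sum.cong) auto
        finally have N: "N = ?n" by simp
        have ss: "s = s0"
        proof
          fix c show "s c = s0 c"
          proof (cases "c \<in> {1..N}")
            case True
            have "pos c \<in> ?P" using pin(1) True by auto
            moreover have "(c, s c) \<in> T (pos c)" using Tps True by (simp add: Phi_mem)
            ultimately have "\<not> s c" using np by fastforce
            then show ?thesis using True N unfolding s0_def by simp
          next
            case False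
            then have "s c = undefined" using sin unfolding PiE_def extensional_def by blast
            moreover have "s0 c = undefined" using False N unfolding s0_def by auto
            ultimately show ?thesis by simp
          qed
        qed
        have pl: "pos \<in> linext ?P" unfolding linext_def
        proof (intro CollectI conjI)
          show "pos \<in> {1..?n} \<rightarrow>\<^sub>E ?P" using pin(1) N by simp
          show "bij_betw pos {1..?n} ?P" unfolding bij_betw_def using pin(2) N
            by (simp add: eq_card_imp_inj_on)
          show "\<forall>c\<in>{1..?n}. \<forall>d\<in>{1..?n}. box_less (pos c) (pos d) \<longrightarrow> c < d"
            using pin(3) N unfolding mono_pos_def by simp
        qed
        show "T \<in> (\<lambda>p. Phi ?n p s0) ` linext ?P" using pl Tps N ss by blast
      qed
    qed
  qed
  have "g_shifted lam = card ?G" unfolding g_shifted_def by simp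
  also have "\<dots> = card (linext ?P)" using bij_betw_same_card[OF bij] by simp
  finally show ?thesis .
qed



definition wQ :: "bool \<Rightarrow> nat \<times> nat \<Rightarrow> nat" where
  "wQ Q v = (if Q \<and> fst v = snd v then 1 else 2)"

lemma card_SQ:
  assumes x: "(p, k, u) \<in> Sig P"
  shows "card (SQ Q (card P) (ins (card P) p k u)) = wQ Q u * (\<Prod>v\<in>P. wQ Q v)"
proof -
  have "card (SQ Q (card P) (ins (card P) p k u)) = (\<Prod>c\<in>{1..Suc (card P)}.
      card (if Q \<and> fst (ins (card P) p k u c) = snd (ins (card P) p k u c) then {False} else UNIV))"
    unfolding SQ_def by (rule card_PiE) simp
  also have "\<dots> = (\<Prod>c\<in>{1..Suc (card P)}. wQ Q (ins (card P) p k u c))"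
    by (intro prod.cong refl) (simp add: wQ_def)
  also have "\<dots> = wQ Q u * (\<Prod>v\<in>P. wQ Q v)" by (rule ins_prod[OF x])
  finally show ?thesis .
qed

lemma prod_wQ:
  assumes sp: "strict_partition lam"
  shows "(\<Prod>v\<in>shifted_diagram lam. wQ Q v) = (if Q then 2 ^ (size_part lam - length lam) else 2 ^ size_part lam)"
proof -
  let ?P = "shifted_diagram lam"
  have fin: "finite ?P" by (rule finite_diagram)
  let ?D = "{v\<in>?P. fst v = snd v}"
  let ?E = "{v\<in>?P. fst v \<noteq> snd v}"
  have "?P = ?D \<union> ?E" by blast
  moreover have "?D \<inter> ?E = {}" by blast
  ultimately have cP: "card ?P = card ?D + card ?E" using fin card_Un_disjoint[of ?D ?E] by simp
  then have cE: "card ?E = size_part lam - length lam" using card_diag[OF sp] card_diagram[of lam] by simp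
  show ?thesis
  proof (cases Q)
    case False
    then show ?thesis unfolding wQ_def using card_diagram[of lam] by simp
  next
    case True
    have "(\<Prod>v\<in>?P. wQ Q v) = (\<Prod>v\<in>?P \<inter> {v. fst v = snd v}. 1) * (\<Prod>v\<in>?P \<inter> - {v. fst v = snd v}. 2)"
      unfolding wQ_def using True prod.If_cases[OF fin, of "\<lambda>v. fst v = snd v" "\<lambda>_. 1" "\<lambda>_. 2"] by simp
    also have "?P \<inter> - {v. fst v = snd v} = ?E" by blast
    finally show ?thesis using True cE by simp
  qed
qed

lemma linext_finite: "finite P \<Longrightarrow> finite (linext P)"
proof -
  assume fin: "finite P"
  have "linext P \<subseteq> {1..card P} \<rightarrow>\<^sub>E P" unfolding linext_def by auto
  then show ?thesis using finite_PiE[OF _ fin] finite_subset by blast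
qed

lemma sum_Sig:
  fixes f :: "nat \<times> nat \<Rightarrow> real"
  assumes fin: "finite P"
  shows "(\<Sum>x\<in>Sig P. f (snd (snd x))) = (\<Sum>p\<in>linext P. \<Sum>k=0..card P. \<Sum>u\<in>maxel (p ` {1..k}). f u)"
proof -
  have fm: "finite (maxel (p ` {1..k}))" for p and k :: nat
    by (rule finite_subset[of _ "p ` {1..k}"]) (auto simp: maxel_def)
  have fm': "finite (maxel (p ` {Suc 0..k}))" for p and k :: nat
    using fm[of p k] by simp
  have "(\<Sum>p\<in>linext P. \<Sum>k=0..card P. \<Sum>u\<in>maxel (p ` {1..k}). f u)
      = (\<Sum>p\<in>linext P. \<Sum>y\<in>(SIGMA k:{0..card P}. maxel (p ` {1..k})). f (snd y))"
    by (intro sum.cong refl) (subst sum.Sigma, auto simp: fm fm' case_prod_unfold)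
  also have "\<dots> = (\<Sum>x\<in>Sig P. f (snd (snd x)))"
    unfolding Sig_def
    by (subst sum.Sigma) (auto simp: fm fm' linext_finite[OF fin] case_prod_unfold)
  finally show ?thesis by simp
qed

lemma card_AQ_formula:
  assumes sp: "strict_partition lam"
  defines "P \<equiv> shifted_diagram lam"
  shows "real (card (AQ Q lam)) = real (\<Prod>v\<in>P. wQ Q v) *
     (\<Sum>p\<in>linext P. \<Sum>k=0..card P. \<Sum>u\<in>maxel (p ` {1..k}). real (wQ Q u))"
proof -
  have fin: "finite P" unfolding P_def by (rule finite_diagram)
  have "card (AQ Q lam) = (\<Sum>pos\<in>Ext1 P. card (SQ Q (card P) pos))"
    unfolding P_def by (rule card_AQ[OF sp])
  also have "\<dots> = (\<Sum>x\<in>Sig P. card (SQ Q (card P) ((\<lambda>(p, k, u). ins (card P) p k u) x)))"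
    using sum.reindex_bij_betw[OF ins_bij[OF fin], of "\<lambda>pos. card (SQ Q (card P) pos)"] by simp
  also have "\<dots> = (\<Sum>x\<in>Sig P. wQ Q (snd (snd x)) * (\<Prod>v\<in>P. wQ Q v))"
  proof (rule sum.cong[OF refl])
    fix x assume x: "x \<in> Sig P"
    obtain p k u where xx: "x = (p, k, u)" by (cases x) auto
    show "card (SQ Q (card P) ((\<lambda>(p, k, u). ins (card P) p k u) x)) = wQ Q (snd (snd x)) * (\<Prod>v\<in>P. wQ Q v)"
      using card_SQ[of p k u P Q] x xx by simp
  qed
  finally have "real (card (AQ Q lam)) = (\<Sum>x\<in>Sig P. real (wQ Q (snd (snd x)))) * real (\<Prod>v\<in>P. wQ Q v)"
    by (simp add: sum_distrib_right)
  also have "\<dots> = real (\<Prod>v\<in>P. wQ Q v) * (\<Sum>p\<in>linext P. \<Sum>k=0..card P. \<Sum>u\<in>maxel (p ` {1..k}). real (wQ Q u))"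
    using sum_Sig[OF fin, of "\<lambda>u. real (wQ Q u)"] by simp
  finally show ?thesis .
qed

lemma toggle_eq: "toggle_minus p I = (if p \<in> maxel I then 1 else 0)"
  unfolding toggle_minus_def maxel_def by simp

lemma toggle_sum:
  assumes sp: "strict_partition lam" and I: "I \<in> order_ideals (shifted_diagram lam)"
  shows "(\<Sum>i=1..length lam. real (toggle_minus (i, i) I)) = real (card {u\<in>maxel I. fst u = snd u})"
proof -
  have "(\<Sum>i=1..length lam. real (toggle_minus (i, i) I)) = real (\<Sum>i=1..length lam. if (i, i) \<in> maxel I then 1 else 0)"
    by (simp add: toggle_eq)
  also have "(\<Sum>i=1..length lam. if (i, i) \<in> maxel I then 1 else 0) = card {i\<in>{1..length lam}. (i, i) \<in> maxel I}"
    by (rule card_filter_sum[symmetric]) simp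
  also have "\<dots> = card {u\<in>maxel I. fst u = snd u}"
  proof -
    have sub: "maxel I \<subseteq> shifted_diagram lam" using I ideal_sub unfolding maxel_def by blast
    have "{u\<in>maxel I. fst u = snd u} = (\<lambda>i. (i, i)) ` {i\<in>{1..length lam}. (i, i) \<in> maxel I}"
    proof
      show "{u\<in>maxel I. fst u = snd u} \<subseteq> (\<lambda>i. (i, i)) ` {i\<in>{1..length lam}. (i, i) \<in> maxel I}"
      proof
        fix u assume u: "u \<in> {u\<in>maxel I. fst u = snd u}"
        obtain a b where ab: "u = (a, b)" by (cases u)
        then have "a = b" using u by simp
        then have "(a, a) \<in> shifted_diagram lam" using u sub ab by auto
        then have "a \<in> {1..length lam}" using diag_in_diagram[OF sp] by blast
        then show "u \<in> (\<lambda>i. (i, i)) ` {i\<in>{1..length lam}. (i, i) \<in> maxel I}"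
          using u ab \<open>a = b\<close> by (intro rev_image_eqI[of a]) auto
      qed
    qed auto
    moreover have "inj_on (\<lambda>i. (i, i)) {i\<in>{1..length lam}. (i, i) \<in> maxel I}" unfolding inj_on_def by auto
    ultimately show ?thesis by (simp add: card_image)
  qed
  finally show ?thesis .
qed

lemma sum_maxel_w:
  assumes sp: "strict_partition lam" and I: "I \<in> order_ideals (shifted_diagram lam)"
  shows "(\<Sum>u\<in>maxel I. real (wQ True u)) = 2 * real (card (maxel I)) - (\<Sum>i=1..length lam. real (toggle_minus (i, i) I))"
proof -
  have fm: "finite (maxel I)" using ideal_finite[OF finite_diagram I] unfolding maxel_def by auto
  have "(\<Sum>u\<in>maxel I. real (wQ True u)) = (\<Sum>u\<in>maxel I. 2 - (if fst u = snd u then 1 else 0))"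
    unfolding wQ_def by (intro sum.cong) auto
  also have "\<dots> = 2 * real (card (maxel I)) - (\<Sum>u\<in>maxel I. if fst u = snd u then 1 else 0)"
    by (simp add: sum_subtractf)
  also have "(\<Sum>u\<in>maxel I. if fst u = snd u then 1 else (0::real)) = real (card {u\<in>maxel I. fst u = snd u})"
    unfolding card_filter_sum[OF fm, of "\<lambda>u. fst u = snd u"] of_nat_sum by (intro sum.cong) auto
  finally show ?thesis using toggle_sum[OF sp I] by simp
qed



theorem lemma7p4:
  fixes lam :: "nat list"
  assumes "strict_partition lam"
  defines "L \<equiv> order_ideals (shifted_diagram lam)"
  defines "n \<equiv> size_part lam"
  shows "(real (card {T. shifted_svt lam T \<and> standard_svt lam T \<and> barely_set_valued lam T})
           = real (n + 1) * 2 ^ (n + 1) * real (g_shifted lam)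
             * exp_maxchain L (\<lambda>I. real (ddeg L I)))
         \<and> (real (card {T. shifted_svt lam T \<and> standard_svt lam T \<and> barely_set_valued lam T
                        \<and> diagonally_unprimed lam T})
           = real (n + 1) * 2 ^ (n - length lam) * real (g_shifted lam)
             * exp_maxchain L (\<lambda>I. 2 * real (ddeg L I)
                  - (\<Sum>i=1..length lam. real (toggle_minus (i, i) I))))"
proof -
  note sp = assms(1)
  let ?P = "shifted_diagram lam"
  have fin: "finite ?P" by (rule finite_diagram)
  have nP: "card ?P = n" unfolding n_def by (rule card_diagram)
  define G where "G = card (linext ?P)"
  have g: "g_shifted lam = G" unfolding G_def by (rule g_eq[OF sp])
  define S1 where "S1 = (\<Sum>p\<in>linext ?P. \<Sum>k=0..n. real (card (maxel (p ` {1..k}))))"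
  define S2 where "S2 = (\<Sum>p\<in>linext ?P. \<Sum>k=0..n. \<Sum>u\<in>maxel (p ` {1..k}). real (wQ True u))"
  have den: "(\<Sum>I\<in>L. real (nchains_through L I)) = real G * real (n + 1)"
    unfolding L_def G_def using sum_nchains_one[OF fin] nP by simp
  have Iin: "p ` {1..k} \<in> L" if "p \<in> linext ?P" "k \<in> {0..n}" for p k
    unfolding L_def using linext_ideal[OF that(1)] that(2) nP by simp
  have e1: "exp_maxchain L (\<lambda>I. real (ddeg L I)) = S1 / (real G * real (n + 1))"
  proof -
    have "(\<Sum>I\<in>L. real (nchains_through L I) * real (ddeg L I))
        = (\<Sum>p\<in>linext ?P. \<Sum>k=0..n. real (ddeg L (p ` {1..k})))"
      unfolding L_def using sum_nchains[OF fin, of "\<lambda>I. real (ddeg (order_ideals ?P) I)"] nP by simp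
    also have "\<dots> = S1" unfolding S1_def
      using Iin ddeg_eq[OF fin] unfolding L_def by (intro sum.cong refl) simp
    finally show ?thesis unfolding exp_maxchain_def den by simp
  qed
  have e2: "exp_maxchain L (\<lambda>I. 2 * real (ddeg L I) - (\<Sum>i=1..length lam. real (toggle_minus (i, i) I)))
      = S2 / (real G * real (n + 1))"
  proof -
    have "(\<Sum>I\<in>L. real (nchains_through L I) * (2 * real (ddeg L I) - (\<Sum>i=1..length lam. real (toggle_minus (i, i) I))))
        = (\<Sum>p\<in>linext ?P. \<Sum>k=0..n. 2 * real (ddeg L (p ` {1..k})) - (\<Sum>i=1..length lam. real (toggle_minus (i, i) (p ` {1..k}))))"
      unfolding L_def using sum_nchains[OF fin, of "\<lambda>I. 2 * real (ddeg (order_ideals ?P) I) - (\<Sum>i=1..length lam. real (toggle_minus (i, i) I))"] nP by simp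
    also have "\<dots> = S2" unfolding S2_def
    proof (intro sum.cong refl)
      fix p k assume p: "p \<in> linext ?P" and k: "k \<in> {0..n}"
      have I: "p ` {1..k} \<in> order_ideals ?P" using Iin[OF p k] unfolding L_def .
      show "2 * real (ddeg L (p ` {1..k})) - (\<Sum>i=1..length lam. real (toggle_minus (i, i) (p ` {1..k})))
          = (\<Sum>u\<in>maxel (p ` {1..k}). real (wQ True u))"
        using sum_maxel_w[OF sp I] ddeg_eq[OF fin I] unfolding L_def by simp
    qed
    finally show ?thesis unfolding exp_maxchain_def den by simp
  qed
  have A1: "{T. shifted_svt lam T \<and> standard_svt lam T \<and> barely_set_valued lam T} = AQ False lam"
    unfolding AQ_def by simp
  have A2: "{T. shifted_svt lam T \<and> standard_svt lam T \<and> barely_set_valued lam T \<and> diagonally_unprimed lam T} = AQ True lam"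
    unfolding AQ_def by simp
  have c1: "real (card (AQ False lam)) = 2 ^ (n + 1) * S1"
  proof -
    have "real (card (AQ False lam)) = real (\<Prod>v\<in>?P. wQ False v) *
        (\<Sum>p\<in>linext ?P. \<Sum>k=0..n. \<Sum>u\<in>maxel (p ` {1..k}). real (wQ False u))"
      using card_AQ_formula[OF sp, of False] nP by simp
    also have "\<dots> = 2 ^ n * (\<Sum>p\<in>linext ?P. \<Sum>k=0..n. 2 * real (card (maxel (p ` {1..k}))))"
      using prod_wQ[OF sp, of False] n_def by (simp add: wQ_def mult.commute)
    also have "\<dots> = 2 ^ (n + 1) * S1" unfolding S1_def by (simp add: sum_distrib_left mult_ac)
    finally show ?thesis .
  qed
  have c2: "real (card (AQ True lam)) = 2 ^ (n - length lam) * S2"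
  proof -
    have "real (card (AQ True lam)) = real (\<Prod>v\<in>?P. wQ True v) * S2"
      unfolding S2_def using card_AQ_formula[OF sp, of True] nP by simp
    then show ?thesis using prod_wQ[OF sp, of True] n_def by simp
  qed
  show ?thesis
  proof (cases "G = 0")
    case True
    then have "linext ?P = {}" using linext_finite[OF fin] unfolding G_def by simp
    then have "S1 = 0" "S2 = 0" unfolding S1_def S2_def by simp_all
    then show ?thesis unfolding A1 A2 c1 c2 e1 e2 g using True by simp
  next
    case False
    have nz: "real G * real (n + 1) \<noteq> 0" using False by simp
    have key: "real (n + 1) * a * real G * (S / (real G * real (n + 1))) = a * S" for a S :: real
      using nz by (simp add: field_simps)
    show ?thesis unfolding A1 A2 c1 c2 e1 e2 g key by simp
  qed
qed

end
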